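(* Let $n=p+q\geq3$, let $\mathfrak g=\mathfrak{so}(p+1,q+1)$ with the $|1|$-grading described below, and let $0\neq Z\in\mathfrak g_1$ satisfy $\langle Z,Z\rangle=0$. Then $$\mathbb R\cdot\mathbb IZ^t=C(Z)\subset F(Z)=\{X\in\mathfrak g_{-1}:ZX=\langle X,X\rangle=0\},\qquad T(Z)=\{X\in\mathfrak g_{-1}:ZX=1,\ \langle X,X\rangle=0\}.$$ Moreover, for every $X\in T(Z)$, $A=[Z,X]$ acts diagonalizably on $\mathfrak g_{-1}$ and on each $\mathbb W$ in the list below, and: (1) for each $X\in T(Z)$ all eigenvalues of $A$ on $\mathfrak g_{-1}$ are non-positive and its $0$-eigenspace equals $C(Z)$; (2) for each $X\in T(Z)$, $\mathbb W_{ss}(A)=0$; (3) $\bigcap_{X\in T(Z)}\mathbb W_{st}(A)=0$.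
   Context: Let $\mathbb I=\mathrm{Id}_p\oplus(-\mathrm{Id}_q)$. Realize $\mathfrak g=\mathfrak{so}(p+1,q+1)$ as the matrices $\begin{pmatrix} a & Z & 0\\ X & A & -\mathbb I Z^t\\ 0 & -X^t\mathbb I & -a\end{pmatrix}$ with $a\in\mathbb R$, $X\in\mathbb R^n$ (column), $Z\in\mathbb R^{n*}$ (row), $A\in\mathfrak{so}(p,q)$; bracket is the matrix commutator. The components $\mathfrak g_{-1},\mathfrak g_0,\mathfrak g_1$ are given by $X$, $(A,a)$ and $Z$. $ZX$ is the real number given by matrix product; $\langle X,Y\rangle=X^t\mathbb IY$ on $\mathfrak g_{-1}$ and $\langle Z,W\rangle=Z\mathbb IW^t$ on $\mathfrak g_1$. For $Z\in\mathfrak g_1$: $C(Z)=\{X\in\mathfrak g_{-1}:[X,Z]=0\}$, $F(Z)=\{X\in\mathfrak g_{-1}:[X,[X,Z]]=0\}$, $T(Z)=\{X\in\mathfrak g_{-1}:[[Z,X],X]=-2X,\ [[Z,X],Z]=2Z\}$. The representations $\mathbb W$ of $\mathfrak g_0\cong\mathfrak{co}(p,q)$ carrying harmonic curvature: for $n\geq5$, the irreducible component of highest weight in $\Lambda^2\mathfrak g_1\otimes\mathfrak{so}(\mathfrak g_{-1})$ (Weyl tensors); for $n=3$, the irreducible component of highest weight in $\Lambda^2\mathfrak g_1\otimes\mathfrak g_1$ (Cotton–York tensors); for $n=4$, the two components of the Weyl-tensor space corresponding to the self-dual and anti-self-dual parts of $\Lambda^2\mathfrak g_1$. For $A$ acting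 diagonalizably on $\mathbb W$, $\mathbb W_{ss}(A)$ (resp. $\mathbb W_{st}(A)$) is the sum of eigenspaces with negative (resp. non-positive) eigenvalues. *)

theory Defs
  imports "HOL-Analysis.Analysis" "HOL-Library.Function_Algebras"
begin

instantiation "fun" :: (type, real_vector) real_vector
begin
definition scaleR_fun :: "real \<Rightarrow> ('a \<Rightarrow> 'b) \<Rightarrow> 'a \<Rightarrow> 'b"
  where "scaleR_fun r f = (\<lambda>x. r *\<^sub>R f x)"
instance
  by standard (auto simp: scaleR_fun_def fun_eq_iff scaleR_add_right scaleR_add_left)
end

text \<open>Vectors of R^n are functions nat => real vanishing at indices >= n; matrices of
  size N are functions nat => nat => real (only entries below N are used).
  Matrix index 0 is the first row/column, indices 1..n the middle block
  (index i+1 corresponds to vector coordinate i), index n+1 the last one.\<close>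

type_synonym mat = "nat \<Rightarrow> nat \<Rightarrow> real"

definition sg :: "nat \<Rightarrow> nat \<Rightarrow> real" where
  "sg p i = (if i < p then 1 else -1)"   \<comment> \<open>diagonal entries of I = Id_p + (-Id_q)\<close>

definition vecs :: "nat \<Rightarrow> (nat \<Rightarrow> real) set" where
  "vecs n = {X. \<forall>i\<ge>n. X i = 0}"

definition unitv :: "nat \<Rightarrow> nat \<Rightarrow> real" where
  "unitv a = (\<lambda>i. if i = a then 1 else 0)"

definition mmul :: "nat \<Rightarrow> mat \<Rightarrow> mat \<Rightarrow> mat" where
  "mmul N A B = (\<lambda>i j. \<Sum>k<N. A i k * B k j)"

definition br :: "nat \<Rightarrow> nat \<Rightarrow> mat \<Rightarrow> mat \<Rightarrow> mat" where
  "br p q A B = (\<lambda>i j. mmul (p+q+2) A B i j - mmul (p+q+2) B A i j)"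

text \<open>Embedding of X in g_{-1} (column X, row -X^t I).\<close>
definition gm1 :: "nat \<Rightarrow> nat \<Rightarrow> (nat \<Rightarrow> real) \<Rightarrow> mat" where
  "gm1 p q X = (\<lambda>i j.
     if j = 0 \<and> 1 \<le> i \<and> i \<le> p+q then X (i-1)
     else if i = p+q+1 \<and> 1 \<le> j \<and> j \<le> p+q then - (X (j-1) * sg p (j-1))
     else 0)"

text \<open>Embedding of Z in g_1 (row Z, column -I Z^t).\<close>
definition g1 :: "nat \<Rightarrow> nat \<Rightarrow> (nat \<Rightarrow> real) \<Rightarrow> mat" where
  "g1 p q Z = (\<lambda>i j.
     if i = 0 \<and> 1 \<le> j \<and> j \<le> p+q then Z (j-1)
     else if j = p+q+1 \<and> 1 \<le> i \<and> i \<le> p+q then - (sg p (i-1) * Z (i-1))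
     else 0)"

definition pairZX :: "nat \<Rightarrow> (nat \<Rightarrow> real) \<Rightarrow> (nat \<Rightarrow> real) \<Rightarrow> real" where
  "pairZX n Z X = (\<Sum>i<n. Z i * X i)"

definition ipm1 :: "nat \<Rightarrow> nat \<Rightarrow> (nat \<Rightarrow> real) \<Rightarrow> (nat \<Rightarrow> real) \<Rightarrow> real" where
  "ipm1 p q X Y = (\<Sum>i<p+q. X i * sg p i * Y i)"

definition ip1 :: "nat \<Rightarrow> nat \<Rightarrow> (nat \<Rightarrow> real) \<Rightarrow> (nat \<Rightarrow> real) \<Rightarrow> real" where
  "ip1 p q Z W = (\<Sum>i<p+q. Z i * sg p i * W i)"

definition IZt :: "nat \<Rightarrow> nat \<Rightarrow> (nat \<Rightarrow> real) \<Rightarrow> (nat \<Rightarrow> real)" where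
  "IZt p q Z = (\<lambda>i. if i < p+q then sg p i * Z i else 0)"

definition Cset :: "nat \<Rightarrow> nat \<Rightarrow> (nat \<Rightarrow> real) \<Rightarrow> (nat \<Rightarrow> real) set" where
  "Cset p q Z = {X \<in> vecs (p+q). br p q (gm1 p q X) (g1 p q Z) = 0}"

definition Fset :: "nat \<Rightarrow> nat \<Rightarrow> (nat \<Rightarrow> real) \<Rightarrow> (nat \<Rightarrow> real) set" where
  "Fset p q Z = {X \<in> vecs (p+q). br p q (gm1 p q X) (br p q (gm1 p q X) (g1 p q Z)) = 0}"

definition Tset :: "nat \<Rightarrow> nat \<Rightarrow> (nat \<Rightarrow> real) \<Rightarrow> (nat \<Rightarrow> real) set" where
  "Tset p q Z = {X \<in> vecs (p+q).
      br p q (br p q (g1 p q Z) (gm1 p q X)) (gm1 p q X) = (-2) *\<^sub>R gm1 p q X \<and>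
      br p q (br p q (g1 p q Z) (gm1 p q X)) (g1 p q Z) = 2 *\<^sub>R g1 p q Z}"

definition adm1 :: "nat \<Rightarrow> nat \<Rightarrow> mat \<Rightarrow> (nat \<Rightarrow> real) \<Rightarrow> (nat \<Rightarrow> real)" where
  "adm1 p q A X = (\<lambda>i. if i < p+q then br p q A (gm1 p q X) (Suc i) 0 else 0)"

text \<open>Matrix of ad_A on g_1 w.r.t. the standard basis: A.e_k = sum_a Mg1 A a k e_a.\<close>
definition Mg1 :: "nat \<Rightarrow> nat \<Rightarrow> mat \<Rightarrow> nat \<Rightarrow> nat \<Rightarrow> real" where
  "Mg1 p q A a k = br p q A (g1 p q (unitv k)) 0 (Suc a)"

definition Nm1 :: "nat \<Rightarrow> nat \<Rightarrow> mat \<Rightarrow> nat \<Rightarrow> nat \<Rightarrow> real" where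
  "Nm1 p q A c k = br p q A (gm1 p q (unitv k)) (Suc c) 0"

text \<open>Weyl tensors, as elements W of Lambda^2 g_1 (x) so(g_{-1}):
  W a b c d is the coefficient of e_a (x) e_b (x) E_cd, with e_a the standard basis of g_1
  and E_cd the matrix unit of gl(g_{-1}).  Conditions: support, antisymmetry in a b,
  membership in so(p,q) in c d, first Bianchi identity for the lowered tensor
  L_abcd = I_cc W_abcd, and trace-freeness.\<close>
definition weyl :: "nat \<Rightarrow> nat \<Rightarrow> (nat \<Rightarrow> nat \<Rightarrow> nat \<Rightarrow> nat \<Rightarrow> real) set" where
  "weyl p q = {W.
     (\<forall>a b c d. \<not> (a < p+q \<and> b < p+q \<and> c < p+q \<and> d < p+q) \<longrightarrow> W a b c d = 0) \<and>
     (\<forall>a b c d. W a b c d = - W b a c d) \<and>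
     (\<forall>a b c d. sg p c * W a b c d = - (sg p d * W a b d c)) \<and>
     (\<forall>a b c d. sg p c * W a b c d + sg p a * W b c a d + sg p b * W c a b d = 0) \<and>
     (\<forall>b d. (\<Sum>a<p+q. W a b a d) = 0)}"

definition weyl_act :: "nat \<Rightarrow> nat \<Rightarrow> mat \<Rightarrow> (nat \<Rightarrow> nat \<Rightarrow> nat \<Rightarrow> nat \<Rightarrow> real)
    \<Rightarrow> (nat \<Rightarrow> nat \<Rightarrow> nat \<Rightarrow> nat \<Rightarrow> real)" where
  "weyl_act p q A W = (\<lambda>a b c d.
      (\<Sum>k<p+q. Mg1 p q A a k * W k b c d) + (\<Sum>k<p+q. Mg1 p q A b k * W a k c d)
    + (\<Sum>k<p+q. Nm1 p q A c k * W a b k d) - (\<Sum>k<p+q. W a b c k * Nm1 p q A k d))"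

text \<open>Cotton-York tensors (n = 3), as elements T of Lambda^2 g_1 (x) g_1:
  antisymmetric in the first two slots, vanishing cyclic sum, trace-free.\<close>
definition cotton :: "nat \<Rightarrow> nat \<Rightarrow> (nat \<Rightarrow> nat \<Rightarrow> nat \<Rightarrow> real) set" where
  "cotton p q = {T.
     (\<forall>a b c. \<not> (a < p+q \<and> b < p+q \<and> c < p+q) \<longrightarrow> T a b c = 0) \<and>
     (\<forall>a b c. T a b c = - T b a c) \<and>
     (\<forall>a b c. T a b c + T b c a + T c a b = 0) \<and>
     (\<forall>a. (\<Sum>b<p+q. sg p b * T a b b) = 0)}"

definition cotton_act :: "nat \<Rightarrow> nat \<Rightarrow> mat \<Rightarrow> (nat \<Rightarrow> nat \<Rightarrow> nat \<Rightarrow> real)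
    \<Rightarrow> (nat \<Rightarrow> nat \<Rightarrow> nat \<Rightarrow> real)" where
  "cotton_act p q A T = (\<lambda>a b c.
      (\<Sum>k<p+q. Mg1 p q A a k * T k b c) + (\<Sum>k<p+q. Mg1 p q A b k * T a k c)
    + (\<Sum>k<p+q. Mg1 p q A c k * T a b k))"

definition eigvecs :: "('v::real_vector \<Rightarrow> 'v) \<Rightarrow> 'v set \<Rightarrow> (real \<Rightarrow> bool) \<Rightarrow> 'v set" where
  "eigvecs f S P = {v \<in> S. \<exists>c. P c \<and> f v = c *\<^sub>R v}"

definition diagonalizable_on :: "('v::real_vector \<Rightarrow> 'v) \<Rightarrow> 'v set \<Rightarrow> bool" where
  "diagonalizable_on f S \<longleftrightarrow> f ` S \<subseteq> S \<and> S \<subseteq> span (eigvecs f S (\<lambda>_. True))"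

definition Wss :: "('v::real_vector \<Rightarrow> 'v) \<Rightarrow> 'v set \<Rightarrow> 'v set" where
  "Wss f S = span (eigvecs f S (\<lambda>c. c < 0))"

definition Wst :: "('v::real_vector \<Rightarrow> 'v) \<Rightarrow> 'v set \<Rightarrow> 'v set" where
  "Wst f S = span (eigvecs f S (\<lambda>c. c \<le> 0))"

end

theory Submission
  imports Defs
begin

lemma sg_sq[simp]: "sg p i * sg p i = 1"
  by (simp add: sg_def)
lemma sg_sq2[simp]: "sg p i * (sg p i * x) = x"
  by (simp add: sg_def)
lemma sg_sq3[simp]: "x * sg p i * (sg p i * y) = x * y"
  by (simp add: sg_def)
lemma sg_nz[simp]: "sg p i \<noteq> 0"
  by (simp add: sg_def)

definition g0m :: "nat \<Rightarrow> nat \<Rightarrow> real \<Rightarrow> mat \<Rightarrow> mat" where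
 "g0m p q a B = (\<lambda>i j. if i = 0 \<and> j = 0 then a else if i = p+q+1 \<and> j = p+q+1 then -a
    else if 1 \<le> i \<and> i \<le> p+q \<and> 1 \<le> j \<and> j \<le> p+q then B (i-1) (j-1) else 0)"

lemma sum_split: "(\<Sum>k<p+q+2. f k) = f 0 + (\<Sum>k<p+q. f (Suc k)) + f (p+q+1)"
proof -
  have "(\<Sum>k<p+q+2. f k) = (\<Sum>k<Suc (p+q). f k) + f (p+q+1)" by simp
  also have "(\<Sum>k<Suc (p+q). f k) = f 0 + (\<Sum>k<p+q. f (Suc k))"
    by (rule sum.lessThan_Suc_shift)
  finally show ?thesis .
qed

lemma br_g1_gm1:
  "br p q (g1 p q Z) (gm1 p q X) =
   g0m p q (pairZX (p+q) Z X) (\<lambda>i j. sg p i * Z i * X j * sg p j - X i * Z j)"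
proof (intro ext)
  fix i j
  show "br p q (g1 p q Z) (gm1 p q X) i j = g0m p q (pairZX (p+q) Z X) (\<lambda>i j. sg p i * Z i * X j * sg p j - X i * Z j) i j"
    unfolding br_def mmul_def sum_split
    apply (auto simp: g1_def gm1_def g0m_def pairZX_def)
    apply (simp add: mult.commute)
    done
qed

definition isso :: "nat \<Rightarrow> nat \<Rightarrow> mat \<Rightarrow> bool" where
  "isso p q B \<longleftrightarrow> (\<forall>i<p+q. \<forall>j<p+q. sg p i * B i j * sg p j = - B j i)"

lemma isso_D: "isso p q B \<Longrightarrow> i < p+q \<Longrightarrow> j < p+q \<Longrightarrow> sg p i * B i j = - (B j i * sg p j)"
proof -
  assume "isso p q B" "i < p+q" "j < p+q"
  then have "sg p i * B i j * sg p j = - B j i" by (auto simp: isso_def)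
  then have "sg p i * B i j * sg p j * sg p j = - B j i * sg p j" by simp
  then show ?thesis by (simp add: mult.assoc)
qed

lemma isso_D2: "isso p q B \<Longrightarrow> i < p+q \<Longrightarrow> j < p+q \<Longrightarrow> B i j * sg p j = - (sg p i * B j i)"
proof -
  assume "isso p q B" "i < p+q" "j < p+q"
  then have "sg p i * B i j * sg p j = - B j i" by (auto simp: isso_def)
  then have "sg p i * (sg p i * B i j * sg p j) = - (sg p i * B j i)" by simp
  then show ?thesis by (simp add: mult.assoc)
qed

lemma br_g0_gm1:
  assumes so: "isso p q B"
  shows "br p q (g0m p q a B) (gm1 p q Y) = gm1 p q (\<lambda>i. (\<Sum>j<p+q. B i j * Y j) - a * Y i)"
proof (intro ext)
  fix i j
  have h: "j < p+q \<Longrightarrow> (\<Sum>k<p+q. Y k * sg p k * B k j) = - ((\<Sum>k<p+q. B j k * Y k) * sg p j)" for j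
  proof -
    assume j: "j < p+q"
    have "(\<Sum>k<p+q. Y k * sg p k * B k j) = (\<Sum>k<p+q. - (B j k * Y k * sg p j))"
      by (rule sum.cong) (use isso_D[OF so _ j] in \<open>auto simp: algebra_simps\<close>)
    then show ?thesis by (simp add: sum_distrib_right sum_negf)
  qed
  show "br p q (g0m p q a B) (gm1 p q Y) i j = gm1 p q (\<lambda>i. (\<Sum>j<p+q. B i j * Y j) - a * Y i) i j"
    unfolding br_def mmul_def sum_split
    using h[of "j - 1"]
    by (auto simp: g0m_def gm1_def algebra_simps sum_negf)
qed

lemma br_g0_g1:
  assumes so: "isso p q B"
  shows "br p q (g0m p q a B) (g1 p q W) = g1 p q (\<lambda>j. a * W j - (\<Sum>i<p+q. W i * B i j))"
proof (intro ext)
  fix i j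
  have h: "i < p+q \<Longrightarrow> (\<Sum>k<p+q. B i k * (sg p k * W k)) = - (sg p i * (\<Sum>k<p+q. W k * B k i))" for i
  proof -
    assume i: "i < p+q"
    have "(\<Sum>k<p+q. B i k * (sg p k * W k)) = (\<Sum>k<p+q. - (sg p i * (W k * B k i)))"
      by (rule sum.cong) (use isso_D2[OF so i] in \<open>auto simp: algebra_simps\<close>)
    then show ?thesis by (simp add: sum_distrib_left sum_negf)
  qed
  show "br p q (g0m p q a B) (g1 p q W) i j = g1 p q (\<lambda>j. a * W j - (\<Sum>i<p+q. W i * B i j)) i j"
    unfolding br_def mmul_def sum_split
    using h[of "i - 1"]
    by (auto simp: g0m_def g1_def algebra_simps sum_negf)
qed

definition B0 :: "nat \<Rightarrow> (nat \<Rightarrow> real) \<Rightarrow> (nat \<Rightarrow> real) \<Rightarrow> mat" where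
  "B0 p Z X = (\<lambda>i j. sg p i * Z i * X j * sg p j - X i * Z j)"

lemma isso_B0: "isso p q (B0 p Z X)"
  by (auto simp: isso_def B0_def algebra_simps)

lemma A_eq: "br p q (g1 p q Z) (gm1 p q X) = g0m p q (pairZX (p+q) Z X) (B0 p Z X)"
  unfolding B0_def by (rule br_g1_gm1)

lemma L1:
  "br p q (br p q (g1 p q Z) (gm1 p q X)) (gm1 p q Y) =
   gm1 p q (\<lambda>i. sg p i * Z i * ipm1 p q X Y - X i * pairZX (p+q) Z Y - pairZX (p+q) Z X * Y i)"
proof -
  have "(\<lambda>i. (\<Sum>j<p+q. B0 p Z X i j * Y j) - pairZX (p+q) Z X * Y i) =
        (\<lambda>i. sg p i * Z i * ipm1 p q X Y - X i * pairZX (p+q) Z Y - pairZX (p+q) Z X * Y i)"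
    apply (auto simp: B0_def ipm1_def pairZX_def left_diff_distrib sum_subtractf sum_distrib_left
        intro!: ext)
    apply (intro arg_cong2[where f="(-)"] sum.cong refl)
    apply (simp_all add: mult_ac)
    done
  then show ?thesis unfolding A_eq br_g0_gm1[OF isso_B0] by simp
qed

lemma L2:
  "br p q (br p q (g1 p q Z) (gm1 p q X)) (g1 p q W) =
   g1 p q (\<lambda>j. pairZX (p+q) Z X * W j + pairZX (p+q) W X * Z j - ip1 p q Z W * X j * sg p j)"
proof -
  have "(\<lambda>j. pairZX (p+q) Z X * W j - (\<Sum>i<p+q. W i * B0 p Z X i j)) =
        (\<lambda>j. pairZX (p+q) Z X * W j + pairZX (p+q) W X * Z j - ip1 p q Z W * X j * sg p j)"
    apply (auto simp: B0_def ip1_def pairZX_def right_diff_distrib sum_subtractf sum_distrib_right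
        intro!: ext)
    apply (intro arg_cong2[where f="(-)"] sum.cong refl)
    apply (simp_all add: mult_ac)
    done
  then show ?thesis unfolding A_eq br_g0_g1[OF isso_B0] by simp
qed

lemma scaleR_fun_apply[simp]: "(c *\<^sub>R f) x = c *\<^sub>R f x"
  by (simp add: scaleR_fun_def)

lemma gm1_eq_iff: "gm1 p q V = gm1 p q V' \<longleftrightarrow> (\<forall>i<p+q. V i = V' i)"
proof
  assume h: "gm1 p q V = gm1 p q V'"
  show "\<forall>i<p+q. V i = V' i"
  proof (intro allI impI)
    fix i assume "i < p+q"
    from fun_cong[OF fun_cong[OF h, of "Suc i"], of 0] show "V i = V' i"
      using \<open>i < p+q\<close> by (simp add: gm1_def)
  qed
next
  assume h: "\<forall>i<p+q. V i = V' i"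
  show "gm1 p q V = gm1 p q V'"
    by (intro ext) (auto simp: gm1_def h)
qed

lemma g1_eq_iff: "g1 p q V = g1 p q V' \<longleftrightarrow> (\<forall>i<p+q. V i = V' i)"
proof
  assume h: "g1 p q V = g1 p q V'"
  show "\<forall>i<p+q. V i = V' i"
  proof (intro allI impI)
    fix i assume "i < p+q"
    from fun_cong[OF fun_cong[OF h, of 0], of "Suc i"] show "V i = V' i"
      using \<open>i < p+q\<close> by (simp add: g1_def)
  qed
next
  assume h: "\<forall>i<p+q. V i = V' i"
  show "g1 p q V = g1 p q V'"
    by (intro ext) (auto simp: g1_def h)
qed

lemma gm1_scale: "c *\<^sub>R gm1 p q V = gm1 p q (c *\<^sub>R V)"
  by (intro ext) (auto simp: gm1_def)

lemma g1_scale: "c *\<^sub>R g1 p q V = g1 p q (c *\<^sub>R V)"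
  by (intro ext) (auto simp: g1_def)

lemma gm1_zero: "0 = gm1 p q (\<lambda>_. 0)"
  by (intro ext) (auto simp: gm1_def)

lemma br_anti: "br p q A B = - br p q B A"
  by (intro ext) (simp add: br_def)

lemma br_neg2: "br p q A (- B) = - br p q A B"
  by (intro ext) (simp add: br_def mmul_def sum_negf)

lemma g0m_zero_iff: "g0m p q a B = 0 \<longleftrightarrow> a = 0 \<and> (\<forall>i<p+q. \<forall>j<p+q. B i j = 0)"
proof
  assume h: "g0m p q a B = 0"
  have "a = 0" using fun_cong[OF fun_cong[OF h, of 0], of 0] by (simp add: g0m_def)
  moreover have "\<forall>i<p+q. \<forall>j<p+q. B i j = 0"
  proof (intro allI impI)
    fix i j assume "i < p+q" "j < p+q"
    then show "B i j = 0" using fun_cong[OF fun_cong[OF h, of "Suc i"], of "Suc j"] by (simp add: g0m_def)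
  qed
  ultimately show "a = 0 \<and> (\<forall>i<p+q. \<forall>j<p+q. B i j = 0)" by blast
next
  assume "a = 0 \<and> (\<forall>i<p+q. \<forall>j<p+q. B i j = 0)"
  then show "g0m p q a B = 0"
    by (intro ext) (auto simp: g0m_def)
qed

lemma vecs_nz: "Z \<in> vecs n \<Longrightarrow> Z \<noteq> 0 \<Longrightarrow> \<exists>j<n. Z j \<noteq> 0"
proof (rule ccontr)
  assume "Z \<in> vecs n" "Z \<noteq> 0" "\<not> (\<exists>j<n. Z j \<noteq> 0)"
  then have "Z = 0" by (intro ext) (auto simp: vecs_def, metis linorder_not_less)
  with \<open>Z \<noteq> 0\<close> show False by simp
qed

lemma IZt_vecs: "IZt p q Z \<in> vecs (p+q)"
  by (simp add: IZt_def vecs_def)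

locale LS =
  fixes p q :: nat and Z :: "nat \<Rightarrow> real"
  assumes n3: "p+q \<ge> 3" and Zin: "Z \<in> vecs (p+q)" and Znz: "Z \<noteq> 0"
    and Znull: "ip1 p q Z Z = 0"
begin

lemma Zout: "i \<ge> p+q \<Longrightarrow> Z i = 0"
  using Zin by (auto simp: vecs_def)

lemma j0_ex: "\<exists>j<p+q. Z j \<noteq> 0"
  using vecs_nz[OF Zin Znz] .

lemma Zcoef0: assumes "\<forall>j<p+q. c * Z j = 0" shows "c = 0"
  using j0_ex assms by auto

lemma Cset_char: "Cset p q Z = {c *\<^sub>R IZt p q Z | c. True}"
proof (intro set_eqI iffI)
  fix X assume "X \<in> Cset p q Z"
  then have Xv: "X \<in> vecs (p+q)" and h: "br p q (gm1 p q X) (g1 p q Z) = 0"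
    by (auto simp: Cset_def)
  from h have "g0m p q (pairZX (p+q) Z X) (B0 p Z X) = 0"
    by (subst (asm) br_anti) (simp add: A_eq)
  then have hb: "\<forall>i<p+q. \<forall>j<p+q. sg p i * Z i * X j * sg p j = X i * Z j"
    by (auto simp: g0m_zero_iff B0_def)
  obtain j where j: "j < p+q" "Z j \<noteq> 0" using j0_ex by blast
  define c where "c = X j * sg p j / Z j"
  have "X = c *\<^sub>R IZt p q Z"
  proof
    fix i show "X i = (c *\<^sub>R IZt p q Z) i"
    proof (cases "i < p+q")
      case True
      then have "sg p i * Z i * X j * sg p j = X i * Z j" using hb j by auto
      then have "X i = sg p i * Z i * X j * sg p j / Z j" using j by (simp add: field_simps)
      then show ?thesis using True by (simp add: IZt_def c_def)
    next
      case False then show ?thesis using Xv by (simp add: IZt_def vecs_def)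
    qed
  qed
  then show "X \<in> {c *\<^sub>R IZt p q Z | c. True}" by blast
next
  fix X assume "X \<in> {c *\<^sub>R IZt p q Z | c. True}"
  then obtain c where X: "X = c *\<^sub>R IZt p q Z" by blast
  have Xi: "X i = (if i < p+q then c * sg p i * Z i else 0)" for i
    by (simp add: X IZt_def)
  have Xv: "X \<in> vecs (p+q)" by (simp add: vecs_def Xi)
  have "pairZX (p+q) Z X = c * ip1 p q Z Z"
    by (simp add: pairZX_def ip1_def Xi sum_distrib_left mult_ac)
  then have z: "pairZX (p+q) Z X = 0" using Znull by simp
  have "g0m p q (pairZX (p+q) Z X) (B0 p Z X) = 0"
    by (auto simp: g0m_zero_iff z B0_def Xi)
  then have "br p q (gm1 p q X) (g1 p q Z) = 0"
    by (subst br_anti) (simp add: A_eq)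
  then show "X \<in> Cset p q Z" using Xv by (simp add: Cset_def)
qed

lemma Fset_char: "Fset p q Z = {X \<in> vecs (p+q). pairZX (p+q) Z X = 0 \<and> ipm1 p q X X = 0}"
proof -
  have key: "br p q (gm1 p q X) (br p q (gm1 p q X) (g1 p q Z)) =
     gm1 p q (\<lambda>i. sg p i * Z i * ipm1 p q X X - X i * pairZX (p+q) Z X - pairZX (p+q) Z X * X i)" for X
    by (subst (2) br_anti, subst br_neg2, subst br_anti) (simp add: L1)
  have "br p q (gm1 p q X) (br p q (gm1 p q X) (g1 p q Z)) = 0 \<longleftrightarrow>
        pairZX (p+q) Z X = 0 \<and> ipm1 p q X X = 0" for X
  proof -
    have "br p q (gm1 p q X) (br p q (gm1 p q X) (g1 p q Z)) = 0 \<longleftrightarrow>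
          (\<forall>i<p+q. sg p i * Z i * ipm1 p q X X = 2 * pairZX (p+q) Z X * X i)"
      unfolding key by (subst gm1_zero, subst gm1_eq_iff) auto
    also have "\<dots> \<longleftrightarrow> pairZX (p+q) Z X = 0 \<and> ipm1 p q X X = 0"
    proof
      assume h: "\<forall>i<p+q. sg p i * Z i * ipm1 p q X X = 2 * pairZX (p+q) Z X * X i"
      have "(\<Sum>i<p+q. Z i * (sg p i * Z i * ipm1 p q X X)) = (\<Sum>i<p+q. Z i * (2 * pairZX (p+q) Z X * X i))"
        using h by simp
      then have "ipm1 p q X X * ip1 p q Z Z = 2 * pairZX (p+q) Z X * pairZX (p+q) Z X"
        by (simp add: ip1_def pairZX_def sum_distrib_left sum_distrib_right mult_ac)
      then have z: "pairZX (p+q) Z X = 0" using Znull by simp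
      then have "\<forall>j<p+q. ipm1 p q X X * Z j = 0" using h
        by (metis mult_eq_0_iff mult.commute sg_nz mult_zero_left mult_zero_right)
      then have "ipm1 p q X X = 0" by (rule Zcoef0)
      with z show "pairZX (p+q) Z X = 0 \<and> ipm1 p q X X = 0" ..
    qed auto
    finally show ?thesis .
  qed
  then show ?thesis by (auto simp: Fset_def)
qed

lemma Tset_char: "Tset p q Z = {X \<in> vecs (p+q). pairZX (p+q) Z X = 1 \<and> ipm1 p q X X = 0}"
proof -
  have e1: "br p q (br p q (g1 p q Z) (gm1 p q X)) (gm1 p q X) = (-2) *\<^sub>R gm1 p q X \<longleftrightarrow>
        (\<forall>i<p+q. sg p i * Z i * ipm1 p q X X - X i * pairZX (p+q) Z X - pairZX (p+q) Z X * X i = (-2) * X i)" for X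
    by (simp only: L1 gm1_scale gm1_eq_iff scaleR_fun_apply real_scaleR_def)
  have e2: "br p q (br p q (g1 p q Z) (gm1 p q X)) (g1 p q Z) = 2 *\<^sub>R g1 p q Z \<longleftrightarrow>
        pairZX (p+q) Z X = 1" for X
  proof -
    have pz: "pairZX (p+q) Z X = pairZX (p+q) Z X" ..
    have "br p q (br p q (g1 p q Z) (gm1 p q X)) (g1 p q Z) = 2 *\<^sub>R g1 p q Z \<longleftrightarrow>
          (\<forall>j<p+q. (2 * pairZX (p+q) Z X - 2) * Z j = 0)"
      unfolding L2 g1_scale g1_eq_iff using Znull by (auto simp: algebra_simps)
    also have "\<dots> \<longleftrightarrow> 2 * pairZX (p+q) Z X - 2 = 0"
      using Zcoef0[of "2 * pairZX (p+q) Z X - 2"] by (metis mult_zero_left)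
    finally show ?thesis by simp
  qed
  have "X \<in> Tset p q Z \<longleftrightarrow> X \<in> vecs (p+q) \<and> pairZX (p+q) Z X = 1 \<and> ipm1 p q X X = 0" for X
  proof -
    have "X \<in> Tset p q Z \<longleftrightarrow> X \<in> vecs (p+q) \<and> pairZX (p+q) Z X = 1 \<and>
          (\<forall>i<p+q. sg p i * Z i * ipm1 p q X X - X i * pairZX (p+q) Z X - pairZX (p+q) Z X * X i = (-2) * X i)"
      unfolding Tset_def using e1 e2 by blast
    also have "\<dots> \<longleftrightarrow> X \<in> vecs (p+q) \<and> pairZX (p+q) Z X = 1 \<and> (\<forall>j<p+q. (sg p j * ipm1 p q X X) * Z j = 0)"
    proof -
      have "pairZX (p+q) Z X = 1 \<Longrightarrow> (sg p i * Z i * ipm1 p q X X - X i * pairZX (p+q) Z X - pairZX (p+q) Z X * X i = (-2) * X i)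
          \<longleftrightarrow> (sg p i * ipm1 p q X X) * Z i = 0" for i
        by (simp add: mult_ac)
      then show ?thesis by blast
    qed
    also have "\<dots> \<longleftrightarrow> X \<in> vecs (p+q) \<and> pairZX (p+q) Z X = 1 \<and> ipm1 p q X X = 0"
    proof -
      have "(\<forall>j<p+q. (sg p j * ipm1 p q X X) * Z j = 0) \<longleftrightarrow> (\<forall>j<p+q. ipm1 p q X X * Z j = 0)"
        by auto
      moreover have "(\<forall>j<p+q. ipm1 p q X X * Z j = 0) \<longleftrightarrow> ipm1 p q X X = 0"
        using Zcoef0[of "ipm1 p q X X"] by (metis mult_zero_left)
      ultimately show ?thesis by simp
    qed
    finally show ?thesis .
  qed
  then show ?thesis by auto
qed

end

lemma pairZX_diff: "pairZX n Z (f - g) = pairZX n Z f - pairZX n Z g"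
  by (simp add: pairZX_def algebra_simps sum_subtractf)
lemma pairZX_add: "pairZX n Z (f + g) = pairZX n Z f + pairZX n Z g"
  by (simp add: pairZX_def algebra_simps sum.distrib)
lemma pairZX_scale: "pairZX n Z (c *\<^sub>R f) = c * pairZX n Z f"
  by (simp add: pairZX_def algebra_simps sum_distrib_left)
lemma ipm1_diff: "ipm1 p q X (f - g) = ipm1 p q X f - ipm1 p q X g"
  by (simp add: ipm1_def algebra_simps sum_subtractf)
lemma ipm1_add: "ipm1 p q X (f + g) = ipm1 p q X f + ipm1 p q X g"
  by (simp add: ipm1_def algebra_simps sum.distrib)
lemma ipm1_scale: "ipm1 p q X (c *\<^sub>R f) = c * ipm1 p q X f"
  by (simp add: ipm1_def algebra_simps sum_distrib_left)
lemma pairZX_0: "pairZX n Z 0 = 0" by (simp add: pairZX_def)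
lemma ipm1_0: "ipm1 p q X 0 = 0" by (simp add: ipm1_def)
lemmas lin_simps = pairZX_0 ipm1_0 pairZX_diff pairZX_add pairZX_scale ipm1_diff ipm1_add ipm1_scale

lemma vecs_diff: "f \<in> vecs n \<Longrightarrow> g \<in> vecs n \<Longrightarrow> f - g \<in> vecs n"
  by (simp add: vecs_def)
lemma vecs_add: "f \<in> vecs n \<Longrightarrow> g \<in> vecs n \<Longrightarrow> f + g \<in> vecs n"
  by (simp add: vecs_def)
lemma vecs_scale: "f \<in> vecs n \<Longrightarrow> c *\<^sub>R f \<in> vecs n"
  by (simp add: vecs_def)

context LS begin

abbreviation U where "U \<equiv> IZt p q Z"

lemma U_i: "U i = (if i < p+q then sg p i * Z i else 0)"
  by (simp add: IZt_def)

lemma ZU: "pairZX (p+q) Z U = 0"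
  using Znull by (simp add: pairZX_def ip1_def U_i mult_ac)

lemma XU: "ipm1 p q X U = pairZX (p+q) Z X"
  by (simp add: pairZX_def ipm1_def U_i mult_ac)

lemma UU: "ipm1 p q U U = 0"
  using Znull by (simp add: ipm1_def ip1_def U_i mult_ac)

lemma ipm1_sym: "ipm1 p q X Y = ipm1 p q Y X"
  by (simp add: ipm1_def mult_ac)

lemma adm1_formula:
  assumes X: "X \<in> Tset p q Z" and v: "v \<in> vecs (p+q)"
  shows "adm1 p q (br p q (g1 p q Z) (gm1 p q X)) v = ipm1 p q X v *\<^sub>R U - pairZX (p+q) Z v *\<^sub>R X - v"
proof
  fix i
  from X have Xv: "X \<in> vecs (p+q)" and ZX: "pairZX (p+q) Z X = 1" by (auto simp: Tset_char)
  show "adm1 p q (br p q (g1 p q Z) (gm1 p q X)) v i = (ipm1 p q X v *\<^sub>R U - pairZX (p+q) Z v *\<^sub>R X - v) i"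
  proof (cases "i < p+q")
    case True
    have "adm1 p q (br p q (g1 p q Z) (gm1 p q X)) v i = sg p i * Z i * ipm1 p q X v - X i * pairZX (p+q) Z v - pairZX (p+q) Z X * v i"
      unfolding adm1_def L1 using True by (simp add: gm1_def)
    then show ?thesis using True by (simp add: ZX U_i mult_ac)
  next
    case False
    then show ?thesis using Xv v by (simp add: adm1_def vecs_def U_i)
  qed
qed


lemma Tset_D: assumes "X \<in> Tset p q Z"
  shows "X \<in> vecs (p+q)" "pairZX (p+q) Z X = 1" "ipm1 p q X X = 0"
  using assms by (auto simp: Tset_char)

lemma U_vecs: "U \<in> vecs (p+q)" by (rule IZt_vecs)

lemma adm1_diag:
  assumes X: "X \<in> Tset p q Z"
  shows "diagonalizable_on (adm1 p q (br p q (g1 p q Z) (gm1 p q X))) (vecs (p+q))"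
proof -
  let ?f = "adm1 p q (br p q (g1 p q Z) (gm1 p q X))"
  note XD = Tset_D[OF X]
  have img: "?f ` vecs (p+q) \<subseteq> vecs (p+q)" by (auto simp: adm1_def vecs_def)
  have fX: "?f X = (-2) *\<^sub>R X"
    using XD by (intro ext) (simp add: adm1_formula[OF X])
  have fU: "?f U = 0 *\<^sub>R U"
    using XD by (simp add: adm1_formula[OF X U_vecs] ZU XU ipm1_sym)
  have eX: "X \<in> eigvecs ?f (vecs (p+q)) (\<lambda>_. True)" unfolding eigvecs_def using XD(1) fX by blast
  have eU: "U \<in> eigvecs ?f (vecs (p+q)) (\<lambda>_. True)" using fU U_vecs by (auto simp: eigvecs_def)
  have "v \<in> span (eigvecs ?f (vecs (p+q)) (\<lambda>_. True))" if v: "v \<in> vecs (p+q)" for v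
  proof -
    define w where "w = v - pairZX (p+q) Z v *\<^sub>R X - ipm1 p q X v *\<^sub>R U"
    have wv: "w \<in> vecs (p+q)" unfolding w_def using v XD U_vecs by (intro vecs_diff vecs_scale)
    have Zw: "pairZX (p+q) Z w = 0" using XD by (simp add: w_def lin_simps ZU)
    have Xw: "ipm1 p q X w = 0" using XD by (simp add: w_def lin_simps XU)
    have "?f w = (-1) *\<^sub>R w" by (simp add: adm1_formula[OF X wv] Zw Xw)
    then have ew: "w \<in> eigvecs ?f (vecs (p+q)) (\<lambda>_. True)" unfolding eigvecs_def using wv by blast
    have "v = w + pairZX (p+q) Z v *\<^sub>R X + ipm1 p q X v *\<^sub>R U" by (simp add: w_def)
    also have "\<dots> \<in> span (eigvecs ?f (vecs (p+q)) (\<lambda>_. True))"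
      by (intro span_add span_scale span_base ew eX eU)
    finally show ?thesis .
  qed
  then show ?thesis using img by (auto simp: diagonalizable_on_def)
qed

lemma adm1_nonpos:
  assumes X: "X \<in> Tset p q Z" and v: "v \<in> vecs (p+q)" and vnz: "v \<noteq> 0"
    and ev: "adm1 p q (br p q (g1 p q Z) (gm1 p q X)) v = c *\<^sub>R v"
  shows "c \<le> 0"
proof (rule ccontr)
  assume c: "\<not> c \<le> 0"
  note XD = Tset_D[OF X]
  have e: "ipm1 p q X v *\<^sub>R U - pairZX (p+q) Z v *\<^sub>R X - v = c *\<^sub>R v"
    using ev adm1_formula[OF X v] by simp
  from arg_cong[OF e, of "pairZX (p+q) Z"] have "- 2 * pairZX (p+q) Z v = c * pairZX (p+q) Z v"
    using XD by (simp add: lin_simps ZU)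
  then have "(c + 2) * pairZX (p+q) Z v = 0" by (simp add: algebra_simps)
  then have Zv: "pairZX (p+q) Z v = 0" using c by simp
  from arg_cong[OF e, of "ipm1 p q X"] have "0 = c * ipm1 p q X v"
    using XD by (simp add: lin_simps XU Zv)
  then have Xv: "ipm1 p q X v = 0" using c by simp
  from e have e2: "- v = c *\<^sub>R v" by (simp add: Zv Xv)
  have "(c + 1) *\<^sub>R v = c *\<^sub>R v + v" by (simp add: algebra_simps)
  also have "\<dots> = 0" using e2[symmetric] by simp
  finally have "(c + 1) *\<^sub>R v = 0" .
  then have "v = 0" using c by simp
  with vnz show False ..
qed

lemma adm1_ker:
  assumes X: "X \<in> Tset p q Z"
  shows "{v \<in> vecs (p+q). adm1 p q (br p q (g1 p q Z) (gm1 p q X)) v = 0} = Cset p q Z"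
proof (intro set_eqI iffI)
  note XD = Tset_D[OF X]
  fix v assume "v \<in> {v \<in> vecs (p+q). adm1 p q (br p q (g1 p q Z) (gm1 p q X)) v = 0}"
  then have v: "v \<in> vecs (p+q)" and e0: "adm1 p q (br p q (g1 p q Z) (gm1 p q X)) v = 0" by auto
  have e: "ipm1 p q X v *\<^sub>R U - pairZX (p+q) Z v *\<^sub>R X - v = 0"
    using e0 adm1_formula[OF X v] by simp
  from arg_cong[OF e, of "pairZX (p+q) Z"] have "- 2 * pairZX (p+q) Z v = 0"
    using XD by (simp add: lin_simps ZU)
  then have Zv: "pairZX (p+q) Z v = 0" by simp
  from e have "v = ipm1 p q X v *\<^sub>R U" by (simp add: Zv)
  then show "v \<in> Cset p q Z" unfolding Cset_char by blast
next
  note XD = Tset_D[OF X]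
  fix v assume "v \<in> Cset p q Z"
  then obtain c where vc: "v = c *\<^sub>R U" unfolding Cset_char by blast
  have v: "v \<in> vecs (p+q)" using vc U_vecs by (simp add: vecs_scale)
  have "adm1 p q (br p q (g1 p q Z) (gm1 p q X)) v = ipm1 p q X v *\<^sub>R U - pairZX (p+q) Z v *\<^sub>R X - v"
    by (rule adm1_formula[OF X v])
  also have "\<dots> = 0" using XD by (simp add: vc lin_simps XU ZU)
  finally have "adm1 p q (br p q (g1 p q Z) (gm1 p q X)) v = 0" .
  with v show "v \<in> {v \<in> vecs (p+q). adm1 p q (br p q (g1 p q Z) (gm1 p q X)) v = 0}" by simp
qed

end

type_synonym t4 = "nat \<Rightarrow> nat \<Rightarrow> nat \<Rightarrow> nat \<Rightarrow> real"
type_synonym t3 = "nat \<Rightarrow> nat \<Rightarrow> nat \<Rightarrow> real"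

definition wact :: "nat \<Rightarrow> mat \<Rightarrow> t4 \<Rightarrow> t4" where
  "wact n K W = (\<lambda>a b c d. (\<Sum>k<n. K a k * W k b c d) + (\<Sum>k<n. K b k * W a k c d)
      - (\<Sum>k<n. K k c * W a b k d) + (\<Sum>k<n. K d k * W a b c k))"

definition ev4 :: "nat \<Rightarrow> t4 \<Rightarrow> (nat \<Rightarrow> real) \<Rightarrow> (nat \<Rightarrow> real) \<Rightarrow> (nat \<Rightarrow> real) \<Rightarrow> (nat \<Rightarrow> real) \<Rightarrow> real" where
  "ev4 n W x y z w = (\<Sum>a<n. x a * (\<Sum>b<n. y b * (\<Sum>c<n. z c * (\<Sum>d<n. w d * W a b c d))))"

definition KT :: "nat \<Rightarrow> mat \<Rightarrow> (nat \<Rightarrow> real) \<Rightarrow> (nat \<Rightarrow> real)" where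
  "KT n K x = (\<lambda>k. \<Sum>a<n. K a k * x a)"
definition Kv :: "nat \<Rightarrow> mat \<Rightarrow> (nat \<Rightarrow> real) \<Rightarrow> (nat \<Rightarrow> real)" where
  "Kv n K x = (\<lambda>k. \<Sum>c<n. K k c * x c)"

lemma pull: fixes x y :: "nat \<Rightarrow> real" shows "(\<Sum>d<n. x d * (\<Sum>k<n. y k * G k d)) = (\<Sum>k<n. y k * (\<Sum>d<n. x d * G k d))"
proof -
  have "(\<Sum>d<n. x d * (\<Sum>k<n. y k * G k d)) = (\<Sum>d<n. \<Sum>k<n. x d * (y k * G k d))"
    by (simp add: sum_distrib_left)
  also have "\<dots> = (\<Sum>k<n. \<Sum>d<n. x d * (y k * G k d))" by (rule sum.swap)
  also have "\<dots> = (\<Sum>k<n. y k * (\<Sum>d<n. x d * G k d))" by (simp add: sum_distrib_left mult.left_commute)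
  finally show ?thesis .
qed

lemma pullT: fixes x :: "nat \<Rightarrow> real" shows "(\<Sum>a<n. x a * (\<Sum>k<n. K a k * G k)) = (\<Sum>k<n. (\<Sum>a<n. K a k * x a) * G k)"
proof -
  have "(\<Sum>a<n. x a * (\<Sum>k<n. K a k * G k)) = (\<Sum>a<n. \<Sum>k<n. x a * (K a k * G k))"
    by (simp add: sum_distrib_left)
  also have "\<dots> = (\<Sum>k<n. \<Sum>a<n. x a * (K a k * G k))" by (rule sum.swap)
  also have "\<dots> = (\<Sum>k<n. (\<Sum>a<n. K a k * x a) * G k)"
    by (rule sum.cong[OF refl]) (simp add: sum_distrib_right mult_ac, simp add: sum_distrib_left)
  finally show ?thesis .
qed

lemma ev4_wact:
  "ev4 n (wact n K W) x y z w = ev4 n W (KT n K x) y z w + ev4 n W x (KT n K y) z w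
     - ev4 n W x y (Kv n K z) w + ev4 n W x y z (KT n K w)"
proof -
  have t1: "(\<Sum>a<n. x a * (\<Sum>b<n. y b * (\<Sum>c<n. z c * (\<Sum>d<n. w d * (\<Sum>k<n. K a k * W k b c d)))))
     = ev4 n W (KT n K x) y z w"
  proof -
    have s1: "\<And>a b c. (\<Sum>d<n. w d * (\<Sum>k<n. K a k * W k b c d)) = (\<Sum>k<n. K a k * (\<Sum>d<n. w d * W k b c d))"
      by (rule pull)
    have s2: "\<And>a b. (\<Sum>c<n. z c * (\<Sum>k<n. K a k * (\<Sum>d<n. w d * W k b c d))) = (\<Sum>k<n. K a k * (\<Sum>c<n. z c * (\<Sum>d<n. w d * W k b c d)))"
      by (rule pull)
    have s3: "\<And>a. (\<Sum>b<n. y b * (\<Sum>k<n. K a k * (\<Sum>c<n. z c * (\<Sum>d<n. w d * W k b c d)))) = (\<Sum>k<n. K a k * (\<Sum>b<n. y b * (\<Sum>c<n. z c * (\<Sum>d<n. w d * W k b c d))))"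
      by (rule pull)
    have s4: "(\<Sum>a<n. x a * (\<Sum>k<n. K a k * (\<Sum>b<n. y b * (\<Sum>c<n. z c * (\<Sum>d<n. w d * W k b c d))))) = (\<Sum>k<n. (\<Sum>a<n. K a k * x a) * (\<Sum>b<n. y b * (\<Sum>c<n. z c * (\<Sum>d<n. w d * W k b c d))))"
      by (rule pullT)
    show ?thesis by (simp only: s1 s2 s3 s4 ev4_def KT_def)
  qed
  have t2: "(\<Sum>a<n. x a * (\<Sum>b<n. y b * (\<Sum>c<n. z c * (\<Sum>d<n. w d * (\<Sum>k<n. K b k * W a k c d)))))
     = ev4 n W x (KT n K y) z w"
  proof -
    have s1: "\<And>a b c. (\<Sum>d<n. w d * (\<Sum>k<n. K b k * W a k c d)) = (\<Sum>k<n. K b k * (\<Sum>d<n. w d * W a k c d))"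
      by (rule pull)
    have s2: "\<And>a b. (\<Sum>c<n. z c * (\<Sum>k<n. K b k * (\<Sum>d<n. w d * W a k c d))) = (\<Sum>k<n. K b k * (\<Sum>c<n. z c * (\<Sum>d<n. w d * W a k c d)))"
      by (rule pull)
    have s3: "\<And>a. (\<Sum>b<n. y b * (\<Sum>k<n. K b k * (\<Sum>c<n. z c * (\<Sum>d<n. w d * W a k c d)))) = (\<Sum>k<n. (\<Sum>b<n. K b k * y b) * (\<Sum>c<n. z c * (\<Sum>d<n. w d * W a k c d)))"
      by (rule pullT)
    show ?thesis by (simp only: s1 s2 s3 ev4_def KT_def)
  qed
  have t3: "(\<Sum>a<n. x a * (\<Sum>b<n. y b * (\<Sum>c<n. z c * (\<Sum>d<n. w d * (\<Sum>k<n. K k c * W a b k d)))))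
     = ev4 n W x y (Kv n K z) w"
  proof -
    have s1: "\<And>a b c. (\<Sum>d<n. w d * (\<Sum>k<n. K k c * W a b k d)) = (\<Sum>k<n. K k c * (\<Sum>d<n. w d * W a b k d))"
      by (rule pull)
    have s2: "\<And>a b. (\<Sum>c<n. z c * (\<Sum>k<n. K k c * (\<Sum>d<n. w d * W a b k d))) = (\<Sum>k<n. (\<Sum>c<n. K k c * z c) * (\<Sum>d<n. w d * W a b k d))"
      by (rule pullT)
    show ?thesis by (simp only: s1 s2 ev4_def Kv_def)
  qed
  have t4: "(\<Sum>a<n. x a * (\<Sum>b<n. y b * (\<Sum>c<n. z c * (\<Sum>d<n. w d * (\<Sum>k<n. K d k * W a b c k)))))
     = ev4 n W x y z (KT n K w)"
  proof -
    have s1: "\<And>a b c. (\<Sum>d<n. w d * (\<Sum>k<n. K d k * W a b c k)) = (\<Sum>k<n. (\<Sum>d<n. K d k * w d) * W a b c k)"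
      by (rule pullT)
    show ?thesis by (simp only: s1 ev4_def KT_def)
  qed
  show ?thesis
    unfolding ev4_def[of n "wact n K W"] unfolding wact_def
    by (simp only: t1[symmetric] t2[symmetric] t3[symmetric] t4[symmetric] distrib_left right_diff_distrib
        sum.distrib sum_subtractf)
qed


lemma sum_apply: "(sum g A) x = sum (\<lambda>i. g i x) A"
  by (induct A rule: infinite_finite_induct) auto

lemma ev4_add1: "ev4 n W (x + x') y z w = ev4 n W x y z w + ev4 n W x' y z w"
  by (simp add: ev4_def algebra_simps sum.distrib)
lemma ev4_add2: "ev4 n W x (y + y') z w = ev4 n W x y z w + ev4 n W x y' z w"
  by (simp add: ev4_def algebra_simps sum.distrib)
lemma ev4_add3: "ev4 n W x y (z + z') w = ev4 n W x y z w + ev4 n W x y z' w"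
  by (simp add: ev4_def algebra_simps sum.distrib)
lemma ev4_add4: "ev4 n W x y z (w + w') = ev4 n W x y z w + ev4 n W x y z w'"
  by (simp add: ev4_def algebra_simps sum.distrib)
lemma ev4_scale1: "ev4 n W (r *\<^sub>R x) y z w = r * ev4 n W x y z w"
  by (simp add: ev4_def sum_distrib_left mult_ac)
lemma ev4_scale2: "ev4 n W x (r *\<^sub>R y) z w = r * ev4 n W x y z w"
  by (simp add: ev4_def sum_distrib_left mult_ac)
lemma ev4_scale3: "ev4 n W x y (r *\<^sub>R z) w = r * ev4 n W x y z w"
  by (simp add: ev4_def sum_distrib_left mult_ac)
lemma ev4_scale4: "ev4 n W x y z (r *\<^sub>R w) = r * ev4 n W x y z w"
  by (simp add: ev4_def sum_distrib_left mult_ac)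
lemma ev4_diff1: "ev4 n W (x - x') y z w = ev4 n W x y z w - ev4 n W x' y z w"
  by (simp add: ev4_def algebra_simps sum_subtractf)
lemma ev4_diff2: "ev4 n W x (y - y') z w = ev4 n W x y z w - ev4 n W x y' z w"
  by (simp add: ev4_def algebra_simps sum_subtractf)
lemma ev4_diff3: "ev4 n W x y (z - z') w = ev4 n W x y z w - ev4 n W x y z' w"
  by (simp add: ev4_def algebra_simps sum_subtractf)
lemma ev4_diff4: "ev4 n W x y z (w - w') = ev4 n W x y z w - ev4 n W x y z w'"
  by (simp add: ev4_def algebra_simps sum_subtractf)
lemma ev4_zero1: "ev4 n W 0 y z w = 0" by (simp add: ev4_def)
lemma ev4_zero2: "ev4 n W x 0 z w = 0" by (simp add: ev4_def)
lemma ev4_zero3: "ev4 n W x y 0 w = 0" by (simp add: ev4_def)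
lemma ev4_zero4: "ev4 n W x y z 0 = 0" by (simp add: ev4_def)

lemmas ev4_lin = ev4_add1 ev4_add2 ev4_add3 ev4_add4 ev4_scale1 ev4_scale2 ev4_scale3 ev4_scale4
  ev4_diff1 ev4_diff2 ev4_diff3 ev4_diff4 ev4_zero1 ev4_zero2 ev4_zero3 ev4_zero4

lemma ev4_sum1: "ev4 n W (sum g A) y z w = (\<Sum>i\<in>A. ev4 n W (g i) y z w)"
proof (induct A rule: infinite_finite_induct)
  case (infinite A) then show ?case by (simp only: sum.infinite ev4_lin not_False_eq_True)
next
  case empty then show ?case by (simp only: sum.empty ev4_lin)
next
  case (insert i A) then show ?case by (simp only: sum.insert ev4_lin not_False_eq_True simp_thms)
qed
lemma ev4_sum2: "ev4 n W x (sum g A) z w = (\<Sum>i\<in>A. ev4 n W x (g i) z w)"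
proof (induct A rule: infinite_finite_induct)
  case (infinite A) then show ?case by (simp only: sum.infinite ev4_lin not_False_eq_True)
next
  case empty then show ?case by (simp only: sum.empty ev4_lin)
next
  case (insert i A) then show ?case by (simp only: sum.insert ev4_lin not_False_eq_True simp_thms)
qed
lemma ev4_sum3: "ev4 n W x y (sum g A) w = (\<Sum>i\<in>A. ev4 n W x y (g i) w)"
proof (induct A rule: infinite_finite_induct)
  case (infinite A) then show ?case by (simp only: sum.infinite ev4_lin not_False_eq_True)
next
  case empty then show ?case by (simp only: sum.empty ev4_lin)
next
  case (insert i A) then show ?case by (simp only: sum.insert ev4_lin not_False_eq_True simp_thms)
qed
lemma ev4_sum4: "ev4 n W x y z (sum g A) = (\<Sum>i\<in>A. ev4 n W x y z (g i))"
proof (induct A rule: infinite_finite_induct)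
  case (infinite A) then show ?case by (simp only: sum.infinite ev4_lin not_False_eq_True)
next
  case empty then show ?case by (simp only: sum.empty ev4_lin)
next
  case (insert i A) then show ?case by (simp only: sum.insert ev4_lin not_False_eq_True simp_thms)
qed

lemma ev4_Wadd: "ev4 n (W + W') x y z w = ev4 n W x y z w + ev4 n W' x y z w"
  by (simp add: ev4_def algebra_simps sum.distrib)
lemma ev4_Wscale: "ev4 n (r *\<^sub>R W) x y z w = r * ev4 n W x y z w"
  by (simp add: ev4_def sum_distrib_left mult_ac)
lemma ev4_Wzero: "ev4 n 0 x y z w = 0"
  by (simp add: ev4_def)
lemma ev4_Wsum: "ev4 n (sum g A) x y z w = (\<Sum>i\<in>A. ev4 n (g i) x y z w)"
proof (induct A rule: infinite_finite_induct)
  case (infinite A) then show ?case by (simp only: sum.infinite ev4_Wzero not_False_eq_True)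
next
  case empty then show ?case by (simp only: sum.empty ev4_Wzero)
next
  case (insert i A) then show ?case by (simp only: sum.insert ev4_Wadd not_False_eq_True simp_thms)
qed

lemma unitv_sum: "(\<Sum>k<n. x k * unitv a k) = (if a < n then x a else 0)"
  by (simp add: unitv_def if_distrib[of "(*) _"] cong: if_cong)

lemma ev4_unit: "a < n \<Longrightarrow> b < n \<Longrightarrow> c < n \<Longrightarrow> d < n \<Longrightarrow>
  ev4 n W (unitv a) (unitv b) (unitv c) (unitv d) = W a b c d"
  by (simp add: ev4_def unitv_def if_distrib[of "\<lambda>x. x * _"] cong: if_cong)

definition box4 :: "nat \<Rightarrow> t4 \<Rightarrow> bool" where
  "box4 n W \<longleftrightarrow> (\<forall>a b c d. \<not> (a < n \<and> b < n \<and> c < n \<and> d < n) \<longrightarrow> W a b c d = 0)"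

lemma box4_ext:
  assumes "box4 n W" "box4 n W'"
    and "\<And>a b c d. a < n \<Longrightarrow> b < n \<Longrightarrow> c < n \<Longrightarrow> d < n \<Longrightarrow>
      ev4 n W (unitv a) (unitv b) (unitv c) (unitv d) = ev4 n W' (unitv a) (unitv b) (unitv c) (unitv d)"
  shows "W = W'"
proof (intro ext)
  fix a b c d
  show "W a b c d = W' a b c d"
  proof (cases "a < n \<and> b < n \<and> c < n \<and> d < n")
    case True then show ?thesis using assms(3)[of a b c d] by (simp add: ev4_unit)
  next
    case False then show ?thesis using assms(1,2) by (simp add: box4_def)
  qed
qed

lemma eig_split:
  fixes f :: "'v::real_vector \<Rightarrow> 'v" and S :: "'v set" and G :: "real \<Rightarrow> 'v"
  assumes lin: "linear f" and sub: "subspace S" and inv: "f ` S \<subseteq> S"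
  shows "finite L \<Longrightarrow> (\<forall>l\<in>L. f (G l) = l *\<^sub>R G l) \<Longrightarrow> sum G L \<in> S \<Longrightarrow> \<forall>l\<in>L. G l \<in> S"
proof (induct L arbitrary: G rule: finite_induct)
  case empty then show ?case by simp
next
  case (insert m L)
  have v: "G m + sum G L \<in> S" using insert by simp
  have fv: "f (G m + sum G L) \<in> S" using inv v by blast
  have "f (G m + sum G L) - m *\<^sub>R (G m + sum G L) = (\<Sum>l\<in>L. (l - m) *\<^sub>R G l)"
  proof -
    have "f (G m + sum G L) = m *\<^sub>R G m + (\<Sum>l\<in>L. l *\<^sub>R G l)"
      using insert by (simp add: linear_add[OF lin] linear_sum[OF lin])
    then show ?thesis by (simp add: algebra_simps scaleR_left_diff_distrib sum_subtractf scaleR_sum_right)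
  qed
  moreover have "f (G m + sum G L) - m *\<^sub>R (G m + sum G L) \<in> S"
    using fv v sub by (intro subspace_diff subspace_scale) auto
  ultimately have s': "(\<Sum>l\<in>L. (l - m) *\<^sub>R G l) \<in> S" by simp
  have e': "\<forall>l\<in>L. f ((l - m) *\<^sub>R G l) = l *\<^sub>R ((l - m) *\<^sub>R G l)"
    using insert by (simp add: linear_scale[OF lin])
  from insert(3)[OF e' s'] have h: "\<forall>l\<in>L. (l - m) *\<^sub>R G l \<in> S" .
  have gl: "\<forall>l\<in>L. G l \<in> S"
  proof
    fix l assume l: "l \<in> L"
    then have lm: "l - m \<noteq> 0" using insert(2) by auto
    have "(1 / (l - m)) *\<^sub>R ((l - m) *\<^sub>R G l) \<in> S"
      by (rule subspace_scale[OF sub]) (use h l in blast)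
    then show "G l \<in> S" using lm by simp
  qed
  then have "sum G L \<in> S" using sub by (intro subspace_sum) auto
  then have "G m \<in> S" using v sub subspace_diff[OF sub v \<open>sum G L \<in> S\<close>] by simp
  with gl show ?case by simp
qed

lemma diag_from_decomp:
  fixes f :: "'v::real_vector \<Rightarrow> 'v" and S :: "'v set"
  assumes lin: "linear f" and sub: "subspace S" and inv: "f ` S \<subseteq> S"
    and dec: "\<And>v. v \<in> S \<Longrightarrow> \<exists>L G. finite L \<and> (\<forall>l\<in>L. f (G l) = l *\<^sub>R G l) \<and> v = sum G L"
  shows "diagonalizable_on f S"
  unfolding diagonalizable_on_def
proof (intro conjI inv subsetI)
  fix v assume v: "v \<in> S"
  obtain L G where L: "finite L" and e: "\<forall>l\<in>L. f (G l) = l *\<^sub>R G l" and vs: "v = sum G L"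
    using dec[OF v] by blast
  have GS: "\<forall>l\<in>L. G l \<in> S" using eig_split[OF lin sub inv L e] v vs by simp
  have "\<forall>l\<in>L. G l \<in> eigvecs f S (\<lambda>_. True)" using GS e by (auto simp: eigvecs_def)
  then have "sum G L \<in> span (eigvecs f S (\<lambda>_. True))"
    by (intro span_sum) (auto intro: span_base)
  then show "v \<in> span (eigvecs f S (\<lambda>_. True))" using vs by simp
qed

lemma Wss_zero:
  fixes f :: "'v::real_vector \<Rightarrow> 'v" and S :: "'v set"
  assumes "\<And>v c. v \<in> S \<Longrightarrow> c < 0 \<Longrightarrow> f v = c *\<^sub>R v \<Longrightarrow> v = 0"
  shows "Wss f S = {0}"
proof -
  have "eigvecs f S (\<lambda>c. c < 0) \<subseteq> {0}" using assms by (auto simp: eigvecs_def)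
  then have "Wss f S \<subseteq> span {0}" unfolding Wss_def by (rule span_mono)
  then have "Wss f S \<subseteq> {0}" by simp
  moreover have "0 \<in> Wss f S" unfolding Wss_def by (rule span_zero)
  ultimately show ?thesis by blast
qed

lemma Wst_sub:
  fixes f :: "'v::real_vector \<Rightarrow> 'v" and S :: "'v set"
  assumes lin: "linear f" and sub: "subspace S"
    and neg: "\<And>v c. v \<in> S \<Longrightarrow> c < 0 \<Longrightarrow> f v = c *\<^sub>R v \<Longrightarrow> v = 0"
  shows "Wst f S \<subseteq> {v \<in> S. f v = 0}"
proof -
  have "eigvecs f S (\<lambda>c. c \<le> 0) \<subseteq> {v \<in> S. f v = 0}"
  proof
    fix v assume "v \<in> eigvecs f S (\<lambda>c. c \<le> 0)"
    then obtain c where v: "v \<in> S" "c \<le> 0" "f v = c *\<^sub>R v" by (auto simp: eigvecs_def)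
    show "v \<in> {v \<in> S. f v = 0}"
    proof (cases "c = 0")
      case True then show ?thesis using v by simp
    next
      case False then have "c < 0" using v(2) by simp
      then have "v = 0" using neg v by blast
      then show ?thesis using v by (simp add: linear_0[OF lin])
    qed
  qed
  moreover have "subspace {v \<in> S. f v = 0}"
    using sub unfolding subspace_def by (auto simp: linear_add[OF lin] linear_scale[OF lin] linear_0[OF lin])
  ultimately show ?thesis unfolding Wst_def by (rule span_minimal)
qed

definition cact :: "nat \<Rightarrow> mat \<Rightarrow> t3 \<Rightarrow> t3" where
  "cact n K T = (\<lambda>a b c. (\<Sum>k<n. K a k * T k b c) + (\<Sum>k<n. K b k * T a k c) + (\<Sum>k<n. K c k * T a b k))"

context LS begin

definition MM :: "(nat \<Rightarrow> real) \<Rightarrow> mat" where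
  "MM X = (\<lambda>a k. if a < p+q \<and> k < p+q then (if a = k then 1 else 0) + Z a * X k - X a * sg p a * U k else 0)"

lemma pairZX_unitv: "pairZX (p+q) (unitv k) X = (if k < p+q then X k else 0)"
  by (simp add: pairZX_def unitv_def if_distrib[of "\<lambda>x. x * _"] cong: if_cong)
lemma ip1_unitv: "ip1 p q Z (unitv k) = (if k < p+q then Z k * sg p k else 0)"
  by (simp add: ip1_def unitv_def if_distrib[of "\<lambda>x. _ * x"] cong: if_cong)
lemma ipm1_unitv: "ipm1 p q X (unitv k) = (if k < p+q then X k * sg p k else 0)"
  by (simp add: ipm1_def unitv_def if_distrib[of "\<lambda>x. _ * x"] cong: if_cong)
lemma pairZX_unitv2: "pairZX (p+q) Z (unitv k) = (if k < p+q then Z k else 0)"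
  by (simp add: pairZX_def unitv_def if_distrib[of "\<lambda>x. _ * x"] cong: if_cong)

lemma Mg1_eq:
  assumes X: "X \<in> Tset p q Z"
  shows "Mg1 p q (br p q (g1 p q Z) (gm1 p q X)) a k = MM X a k"
proof -
  note XD = Tset_D[OF X]
  show ?thesis
    unfolding Mg1_def L2 pairZX_unitv ip1_unitv using XD
    by (auto simp: g1_def MM_def U_i unitv_def mult_ac)
qed

lemma Nm1_eq:
  assumes X: "X \<in> Tset p q Z"
  shows "Nm1 p q (br p q (g1 p q Z) (gm1 p q X)) c k = - MM X k c"
proof -
  note XD = Tset_D[OF X]
  show ?thesis
    unfolding Nm1_def L1 ipm1_unitv pairZX_unitv2 using XD
    by (auto simp: gm1_def MM_def U_i unitv_def mult_ac)
qed

lemma weyl_act_eq: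
  assumes X: "X \<in> Tset p q Z"
  shows "weyl_act p q (br p q (g1 p q Z) (gm1 p q X)) = wact (p+q) (MM X)"
proof (intro ext)
  fix W a b c d
  show "weyl_act p q (br p q (g1 p q Z) (gm1 p q X)) W a b c d = wact (p+q) (MM X) W a b c d"
    unfolding weyl_act_def wact_def
    by (simp add: Mg1_eq[OF X] Nm1_eq[OF X] sum_negf mult_ac)
qed

lemma cotton_act_eq:
  assumes X: "X \<in> Tset p q Z"
  shows "cotton_act p q (br p q (g1 p q Z) (gm1 p q X)) = cact (p+q) (MM X)"
proof (intro ext)
  fix W a b c
  show "cotton_act p q (br p q (g1 p q Z) (gm1 p q X)) W a b c = cact (p+q) (MM X) W a b c"
    unfolding cotton_act_def cact_def
    by (simp add: Mg1_eq[OF X])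
qed

end

lemma sg_cases: "sg p i = 1 \<or> sg p i = -1"
  by (simp add: sg_def)

lemma sum_neg_cong: fixes f g :: "nat \<Rightarrow> real" shows "(\<And>k. k \<in> A \<Longrightarrow> f k = - g k) \<Longrightarrow> sum f A = - sum g A"
  by (simp add: sum_negf[symmetric] cong: sum.cong)

definition ksupp :: "nat \<Rightarrow> mat \<Rightarrow> bool" where
  "ksupp n K \<longleftrightarrow> (\<forall>a k. \<not> (a < n \<and> k < n) \<longrightarrow> K a k = 0)"
definition kso :: "nat \<Rightarrow> mat \<Rightarrow> bool" where
  "kso p K \<longleftrightarrow> (\<forall>a k. sg p a * K a k * sg p k = - K k a)"

lemma kso_D1: "kso p K \<Longrightarrow> K c k * sg p k = - (K k c * sg p c)"
proof -
  assume "kso p K"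
  then have "sg p k * K k c * sg p c = - K c k" by (simp add: kso_def)
  then have "sg p k * (sg p k * K k c * sg p c) = - (sg p k * K c k)" by simp
  then show ?thesis by (simp add: mult_ac)
qed

lemma weyl_D:
  assumes "W \<in> weyl p q"
  shows "\<And>a b c d. \<not> (a < p+q \<and> b < p+q \<and> c < p+q \<and> d < p+q) \<Longrightarrow> W a b c d = 0"
    and "\<And>a b c d. W a b c d = - W b a c d"
    and "\<And>a b c d. sg p c * W a b c d = - (sg p d * W a b d c)"
    and "\<And>a b c d. sg p c * W a b c d + sg p a * W b c a d + sg p b * W c a b d = 0"
    and "\<And>b d. (\<Sum>a<p+q. W a b a d) = 0"
  using assms unfolding weyl_def mem_Collect_eq by blast+

lemma wact_supp:
  assumes W: "W \<in> weyl p q" and K: "ksupp (p+q) K"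
  shows "\<forall>a b c d. \<not> (a < p+q \<and> b < p+q \<and> c < p+q \<and> d < p+q) \<longrightarrow> wact (p+q) K W a b c d = 0"
proof (intro allI impI)
  fix a b c d assume out: "\<not> (a < p+q \<and> b < p+q \<and> c < p+q \<and> d < p+q)"
  have Ws: "\<And>a b c d. \<not> (a < p+q \<and> b < p+q \<and> c < p+q \<and> d < p+q) \<Longrightarrow> W a b c d = 0"
    using weyl_D[OF W] by blast
  have Ks: "\<And>a k. \<not> (a < p+q \<and> k < p+q) \<Longrightarrow> K a k = 0" using K unfolding ksupp_def by blast
  have t1: "(\<Sum>k<p+q. K a k * W k b c d) = 0" using out by (intro sum.neutral) (auto simp: Ws Ks)
  have t2: "(\<Sum>k<p+q. K b k * W a k c d) = 0" using out by (intro sum.neutral) (auto simp: Ws Ks)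
  have t3: "(\<Sum>k<p+q. K k c * W a b k d) = 0" using out by (intro sum.neutral) (auto simp: Ws Ks)
  have t4: "(\<Sum>k<p+q. K d k * W a b c k) = 0" using out by (intro sum.neutral) (auto simp: Ws Ks)
  show "wact (p+q) K W a b c d = 0" by (simp add: wact_def t1 t2 t3 t4)
qed

lemma wact_anti:
  assumes W: "W \<in> weyl p q"
  shows "wact (p+q) K W a b c d = - wact (p+q) K W b a c d"
proof -
  have h: "\<And>a b c d. W a b c d = - W b a c d" using weyl_D[OF W] by blast
  have s1: "(\<Sum>k<p+q. K a k * W k b c d) = - (\<Sum>k<p+q. K a k * W b k c d)"
    by (rule sum_neg_cong) (subst h, simp)
  have s2: "(\<Sum>k<p+q. K b k * W a k c d) = - (\<Sum>k<p+q. K b k * W k a c d)"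
    by (rule sum_neg_cong) (subst h, simp)
  have s3: "(\<Sum>k<p+q. K k c * W a b k d) = - (\<Sum>k<p+q. K k c * W b a k d)"
    by (rule sum_neg_cong) (subst h, simp)
  have s4: "(\<Sum>k<p+q. K d k * W a b c k) = - (\<Sum>k<p+q. K d k * W b a c k)"
    by (rule sum_neg_cong) (subst h, simp)
  show ?thesis unfolding wact_def by (simp add: s1 s2 s3 s4)
qed

lemma wact_so:
  assumes W: "W \<in> weyl p q" and K: "kso p K"
  shows "sg p c * wact (p+q) K W a b c d = - (sg p d * wact (p+q) K W a b d c)"
proof -
  have h: "\<And>a b c d. sg p c * W a b c d = - (sg p d * W a b d c)" using weyl_D[OF W] by blast
  have hk: "\<And>a k. sg p a * K a k * sg p k = - K k a" using K unfolding kso_def by blast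
  have s1: "sg p c * (\<Sum>k<p+q. K a k * W k b c d) = - (sg p d * (\<Sum>k<p+q. K a k * W k b d c))"
    unfolding sum_distrib_left sum_negf[symmetric]
  proof (rule sum.cong[OF refl])
    fix k
    have e: "sg p c * W k b c d = - (sg p d * W k b d c)" by (rule h)
    have "sg p c * (K a k * W k b c d) = K a k * (sg p c * W k b c d)" by (simp add: mult_ac)
    also have "\<dots> = - (sg p d * (K a k * W k b d c))" using e by (simp add: mult_ac)
    finally show "sg p c * (K a k * W k b c d) = - (sg p d * (K a k * W k b d c))" .
  qed
  have s2: "sg p c * (\<Sum>k<p+q. K b k * W a k c d) = - (sg p d * (\<Sum>k<p+q. K b k * W a k d c))"
    unfolding sum_distrib_left sum_negf[symmetric]
  proof (rule sum.cong[OF refl])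
    fix k
    have e: "sg p c * W a k c d = - (sg p d * W a k d c)" by (rule h)
    have "sg p c * (K b k * W a k c d) = K b k * (sg p c * W a k c d)" by (simp add: mult_ac)
    also have "\<dots> = - (sg p d * (K b k * W a k d c))" using e by (simp add: mult_ac)
    finally show "sg p c * (K b k * W a k c d) = - (sg p d * (K b k * W a k d c))" .
  qed
  have s3: "sg p c * (\<Sum>k<p+q. K k c * W a b k d) = (sg p d * (\<Sum>k<p+q. K c k * W a b d k))"
    unfolding sum_distrib_left
  proof (rule sum.cong[OF refl])
    fix k
    have e1: "sg p k * W a b k d = - (sg p d * W a b d k)" by (rule h)
    have e2: "sg p k * K k c * sg p c = - K c k" by (rule hk)
    have e1': "W a b k d = - (sg p k * sg p d * W a b d k)"
      using arg_cong[OF e1, of "(*) (sg p k)"] by (simp add: mult_ac)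
    have e2': "K c k = - (sg p k * K k c * sg p c)" using e2 by simp
    show "sg p c * (K k c * W a b k d) = sg p d * (K c k * W a b d k)"
      unfolding e1' e2' using sg_cases[of p k] sg_cases[of p c] sg_cases[of p d]
      by (elim disjE) (simp_all add: algebra_simps)
  qed
  have s4: "sg p c * (\<Sum>k<p+q. K d k * W a b c k) = (sg p d * (\<Sum>k<p+q. K k d * W a b k c))"
    unfolding sum_distrib_left
  proof (rule sum.cong[OF refl])
    fix k
    have e1: "sg p k * W a b k c = - (sg p c * W a b c k)" by (rule h)
    have e2: "sg p k * K k d * sg p d = - K d k" by (rule hk)
    have e1': "W a b k c = - (sg p k * sg p c * W a b c k)"
      using arg_cong[OF e1, of "(*) (sg p k)"] by (simp add: mult_ac)
    have e2': "K d k = - (sg p k * K k d * sg p d)" using e2 by simp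
    show "sg p c * (K d k * W a b c k) = sg p d * (K k d * W a b k c)"
      unfolding e1' e2' using sg_cases[of p k] sg_cases[of p c] sg_cases[of p d]
      by (elim disjE) (simp_all add: algebra_simps)
  qed
  show ?thesis unfolding wact_def by (simp add: algebra_simps s1 s2 s3 s4)
qed


lemma wact_low:
  assumes K: "kso p K"
  shows "sg p c * wact (p+q) K W a b c d =
    (\<Sum>k<p+q. K a k * (sg p c * W k b c d)) + (\<Sum>k<p+q. K b k * (sg p c * W a k c d))
    + (\<Sum>k<p+q. K c k * (sg p k * W a b k d)) + (\<Sum>k<p+q. K d k * (sg p c * W a b c k))"
proof -
  have s3: "sg p c * (\<Sum>k<p+q. K k c * W a b k d) = - (\<Sum>k<p+q. K c k * (sg p k * W a b k d))"
    unfolding sum_distrib_left sum_negf[symmetric]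
  proof (rule sum.cong[OF refl])
    fix k
    have "K c k * sg p k = - (K k c * sg p c)" by (rule kso_D1[OF K])
    then show "sg p c * (K k c * W a b k d) = - (K c k * (sg p k * W a b k d))"
      by (metis minus_minus mult.assoc mult.commute mult_minus_left)
  qed
  show ?thesis unfolding wact_def distrib_left right_diff_distrib s3
    by (simp add: sum_distrib_left mult_ac)
qed

lemma wact_bianchi:
  assumes W: "W \<in> weyl p q" and K: "kso p K"
  shows "sg p c * wact (p+q) K W a b c d + sg p a * wact (p+q) K W b c a d + sg p b * wact (p+q) K W c a b d = 0"
proof -
  note B = weyl_D(4)[OF W]
  have "sg p c * wact (p+q) K W a b c d + sg p a * wact (p+q) K W b c a d + sg p b * wact (p+q) K W c a b d
    = (\<Sum>k<p+q. K a k * (sg p c * W k b c d + sg p k * W b c k d + sg p b * W c k b d))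
    + (\<Sum>k<p+q. K b k * (sg p c * W a k c d + sg p a * W k c a d + sg p k * W c a k d))
    + (\<Sum>k<p+q. K c k * (sg p k * W a b k d + sg p a * W b k a d + sg p b * W k a b d))
    + (\<Sum>k<p+q. K d k * (sg p c * W a b c k + sg p a * W b c a k + sg p b * W c a b k))"
    unfolding wact_low[OF K] by (simp add: distrib_left sum.distrib algebra_simps)
  also have "\<dots> = 0" by (simp add: B)
  finally show ?thesis .
qed

lemma wact_trace:
  assumes W: "W \<in> weyl p q"
  shows "(\<Sum>a<p+q. wact (p+q) K W a b a d) = 0"
proof -
  note T = weyl_D(5)[OF W]
  have e13: "(\<Sum>a<p+q. \<Sum>k<p+q. K k a * W a b k d) = (\<Sum>a<p+q. \<Sum>k<p+q. K a k * W k b a d)"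
    by (rule sum.swap)
  have e2: "(\<Sum>a<p+q. \<Sum>k<p+q. K b k * W a k a d) = 0"
  proof -
    have "(\<Sum>a<p+q. \<Sum>k<p+q. K b k * W a k a d) = (\<Sum>k<p+q. \<Sum>a<p+q. K b k * W a k a d)" by (rule sum.swap)
    also have "\<dots> = (\<Sum>k<p+q. K b k * (\<Sum>a<p+q. W a k a d))" by (simp add: sum_distrib_left)
    also have "\<dots> = 0" by (simp add: T)
    finally show ?thesis .
  qed
  have e4: "(\<Sum>a<p+q. \<Sum>k<p+q. K d k * W a b a k) = 0"
  proof -
    have "(\<Sum>a<p+q. \<Sum>k<p+q. K d k * W a b a k) = (\<Sum>k<p+q. \<Sum>a<p+q. K d k * W a b a k)" by (rule sum.swap)
    also have "\<dots> = (\<Sum>k<p+q. K d k * (\<Sum>a<p+q. W a b a k))" by (simp add: sum_distrib_left)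
    also have "\<dots> = 0" by (simp add: T)
    finally show ?thesis .
  qed
  show ?thesis unfolding wact_def
    by (simp only: sum.distrib sum_subtractf e13 e2 e4)
qed

lemma wact_weyl:
  assumes W: "W \<in> weyl p q" and Ks: "ksupp (p+q) K" and K: "kso p K"
  shows "wact (p+q) K W \<in> weyl p q"
  unfolding weyl_def mem_Collect_eq
  using wact_supp[OF W Ks] wact_anti[OF W] wact_so[OF W K] wact_bianchi[OF W K] wact_trace[OF W]
  by blast

lemma weyl_subspace: "subspace (weyl p q)"
  unfolding subspace_def
proof (intro conjI ballI allI)
  show "0 \<in> weyl p q" by (simp add: weyl_def)
next
  fix x y assume x: "x \<in> weyl p q" and y: "y \<in> weyl p q"
  note X = weyl_D[OF x] and Y = weyl_D[OF y]
  show "x + y \<in> weyl p q"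
    unfolding weyl_def mem_Collect_eq
  proof (intro conjI allI impI)
    fix a b c d assume h: "\<not> (a < p+q \<and> b < p+q \<and> c < p+q \<and> d < p+q)"
    show "(x + y) a b c d = 0" using X(1)[OF h] Y(1)[OF h] by simp
  next
    fix a b c d
    show "(x + y) a b c d = - (x + y) b a c d" using X(2)[of a b c d] Y(2)[of a b c d] by simp
    show "sg p c * (x + y) a b c d = - (sg p d * (x + y) a b d c)"
      using X(3)[of c a b d] Y(3)[of c a b d] by (simp add: algebra_simps)
    show "sg p c * (x + y) a b c d + sg p a * (x + y) b c a d + sg p b * (x + y) c a b d = 0"
      using X(4)[of c a b d] Y(4)[of c a b d] by (simp add: algebra_simps)
  next
    fix b d
    show "(\<Sum>a<p+q. (x + y) a b a d) = 0" using X(5)[of b d] Y(5)[of b d] by (simp add: sum.distrib)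
  qed
next
  fix r :: real and x assume x: "x \<in> weyl p q"
  note X = weyl_D[OF x]
  show "r *\<^sub>R x \<in> weyl p q"
    unfolding weyl_def mem_Collect_eq
  proof (intro conjI allI impI)
    fix a b c d assume h: "\<not> (a < p+q \<and> b < p+q \<and> c < p+q \<and> d < p+q)"
    show "(r *\<^sub>R x) a b c d = 0" using X(1)[OF h] by simp
  next
    fix a b c d
    show "(r *\<^sub>R x) a b c d = - (r *\<^sub>R x) b a c d" using X(2)[of a b c d] by simp
    show "sg p c * (r *\<^sub>R x) a b c d = - (sg p d * (r *\<^sub>R x) a b d c)"
      using X(3)[of c a b d] by (simp add: algebra_simps)
    have "sg p c * (r *\<^sub>R x) a b c d + sg p a * (r *\<^sub>R x) b c a d + sg p b * (r *\<^sub>R x) c a b d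
      = r * (sg p c * x a b c d + sg p a * x b c a d + sg p b * x c a b d)" by (simp add: algebra_simps)
    then show "sg p c * (r *\<^sub>R x) a b c d + sg p a * (r *\<^sub>R x) b c a d + sg p b * (r *\<^sub>R x) c a b d = 0"
      using X(4)[of c a b d] by simp
  next
    fix b d
    show "(\<Sum>a<p+q. (r *\<^sub>R x) a b a d) = 0" using X(5)[of b d] by (simp add: sum_distrib_left[symmetric])
  qed
qed

lemma wact_linear: "linear (wact n K)"
proof (rule linearI)
  fix x y :: t4
  show "wact n K (x + y) = wact n K x + wact n K y"
    by (intro ext) (simp add: wact_def sum.distrib distrib_left)
next
  fix r :: real and x :: t4
  show "wact n K (r *\<^sub>R x) = r *\<^sub>R wact n K x"
    by (intro ext) (simp add: wact_def sum_distrib_left mult_ac right_diff_distrib distrib_left)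
qed

definition Idn :: "nat \<Rightarrow> mat" where
  "Idn n = (\<lambda>a k. if a < n \<and> k < n \<and> a = k then 1 else 0)"

lemma wact_Kadd: "wact n (\<lambda>a k. K1 a k + K2 a k) W = wact n K1 W + wact n K2 W"
  by (intro ext) (simp add: wact_def sum.distrib distrib_right)

lemma Idn_sum1: "(\<Sum>k<n. Idn n a k * f k) = (if a < n then f a else 0)"
  by (simp add: Idn_def if_distrib[of "\<lambda>x. x * _"] cong: if_cong)
lemma Idn_sum2: "(\<Sum>k<n. Idn n k a * f k) = (if a < n then f a else 0)"
  by (simp add: Idn_def if_distrib[of "\<lambda>x. x * _"] cong: if_cong)

lemma wact_Idn:
  assumes W: "W \<in> weyl p q"
  shows "wact (p+q) (Idn (p+q)) W = 2 *\<^sub>R W"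
proof (intro ext)
  fix a b c d
  note Ws = weyl_D(1)[OF W]
  show "wact (p+q) (Idn (p+q)) W a b c d = (2 *\<^sub>R W) a b c d"
    unfolding wact_def Idn_sum1 Idn_sum2 using Ws[of a b c d] by auto
qed

context LS begin

definition KK :: "(nat \<Rightarrow> real) \<Rightarrow> mat" where
  "KK X = (\<lambda>a k. if a < p+q \<and> k < p+q then Z a * X k - X a * sg p a * U k else 0)"

lemma MM_split: "MM X = (\<lambda>a k. Idn (p+q) a k + KK X a k)"
  by (intro ext) (auto simp: MM_def Idn_def KK_def)

lemma KK_supp: "ksupp (p+q) (KK X)"
  by (simp add: ksupp_def KK_def)

lemma KK_so: "kso p (KK X)"
  unfolding kso_def
proof (intro allI)
  fix a k
  show "sg p a * KK X a k * sg p k = - KK X k a"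
    using sg_cases[of p a] sg_cases[of p k]
    by (elim disjE) (auto simp: KK_def U_i algebra_simps)
qed

lemma weyl_inv:
  assumes W: "W \<in> weyl p q"
  shows "wact (p+q) (MM X) W \<in> weyl p q"
proof -
  have "wact (p+q) (MM X) W = 2 *\<^sub>R W + wact (p+q) (KK X) W"
    unfolding MM_split wact_Kadd wact_Idn[OF W] ..
  also have "\<dots> \<in> weyl p q"
    using weyl_subspace W wact_weyl[OF W KK_supp KK_so]
    by (intro subspace_add subspace_scale) auto
  finally show ?thesis .
qed

end

definition s1 :: "nat \<Rightarrow> mat \<Rightarrow> t4 \<Rightarrow> t4" where "s1 n K W = (\<lambda>a b c d. \<Sum>k<n. K a k * W k b c d)"
definition s2 :: "nat \<Rightarrow> mat \<Rightarrow> t4 \<Rightarrow> t4" where "s2 n K W = (\<lambda>a b c d. \<Sum>k<n. K b k * W a k c d)"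
definition s3 :: "nat \<Rightarrow> mat \<Rightarrow> t4 \<Rightarrow> t4" where "s3 n K W = (\<lambda>a b c d. \<Sum>k<n. K k c * W a b k d)"
definition s4 :: "nat \<Rightarrow> mat \<Rightarrow> t4 \<Rightarrow> t4" where "s4 n K W = (\<lambda>a b c d. \<Sum>k<n. K d k * W a b c k)"

lemma ev4_s1: "ev4 n (s1 n K W) x y z w = ev4 n W (KT n K x) y z w"
proof -
  have "(\<Sum>a<n. x a * (\<Sum>b<n. y b * (\<Sum>c<n. z c * (\<Sum>d<n. w d * (\<Sum>k<n. K a k * W k b c d)))))
     = ev4 n W (KT n K x) y z w"
  proof -
    have s1: "\<And>a b c. (\<Sum>d<n. w d * (\<Sum>k<n. K a k * W k b c d)) = (\<Sum>k<n. K a k * (\<Sum>d<n. w d * W k b c d))"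
      by (rule pull)
    have s2: "\<And>a b. (\<Sum>c<n. z c * (\<Sum>k<n. K a k * (\<Sum>d<n. w d * W k b c d))) = (\<Sum>k<n. K a k * (\<Sum>c<n. z c * (\<Sum>d<n. w d * W k b c d)))"
      by (rule pull)
    have s3: "\<And>a. (\<Sum>b<n. y b * (\<Sum>k<n. K a k * (\<Sum>c<n. z c * (\<Sum>d<n. w d * W k b c d)))) = (\<Sum>k<n. K a k * (\<Sum>b<n. y b * (\<Sum>c<n. z c * (\<Sum>d<n. w d * W k b c d))))"
      by (rule pull)
    have s4: "(\<Sum>a<n. x a * (\<Sum>k<n. K a k * (\<Sum>b<n. y b * (\<Sum>c<n. z c * (\<Sum>d<n. w d * W k b c d))))) = (\<Sum>k<n. (\<Sum>a<n. K a k * x a) * (\<Sum>b<n. y b * (\<Sum>c<n. z c * (\<Sum>d<n. w d * W k b c d))))"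
      by (rule pullT)
    show ?thesis by (simp only: s1 s2 s3 s4 ev4_def KT_def)
  qed
  then show ?thesis by (simp only: ev4_def s1_def)
qed

lemma ev4_s2: "ev4 n (s2 n K W) x y z w = ev4 n W x (KT n K y) z w"
proof -
  have "(\<Sum>a<n. x a * (\<Sum>b<n. y b * (\<Sum>c<n. z c * (\<Sum>d<n. w d * (\<Sum>k<n. K b k * W a k c d)))))
     = ev4 n W x (KT n K y) z w"
  proof -
    have s1: "\<And>a b c. (\<Sum>d<n. w d * (\<Sum>k<n. K b k * W a k c d)) = (\<Sum>k<n. K b k * (\<Sum>d<n. w d * W a k c d))"
      by (rule pull)
    have s2: "\<And>a b. (\<Sum>c<n. z c * (\<Sum>k<n. K b k * (\<Sum>d<n. w d * W a k c d))) = (\<Sum>k<n. K b k * (\<Sum>c<n. z c * (\<Sum>d<n. w d * W a k c d)))"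
      by (rule pull)
    have s3: "\<And>a. (\<Sum>b<n. y b * (\<Sum>k<n. K b k * (\<Sum>c<n. z c * (\<Sum>d<n. w d * W a k c d)))) = (\<Sum>k<n. (\<Sum>b<n. K b k * y b) * (\<Sum>c<n. z c * (\<Sum>d<n. w d * W a k c d)))"
      by (rule pullT)
    show ?thesis by (simp only: s1 s2 s3 ev4_def KT_def)
  qed
  then show ?thesis by (simp only: ev4_def s2_def)
qed

lemma ev4_s3: "ev4 n (s3 n K W) x y z w = ev4 n W x y (Kv n K z) w"
proof -
  have "(\<Sum>a<n. x a * (\<Sum>b<n. y b * (\<Sum>c<n. z c * (\<Sum>d<n. w d * (\<Sum>k<n. K k c * W a b k d)))))
     = ev4 n W x y (Kv n K z) w"
  proof -
    have s1: "\<And>a b c. (\<Sum>d<n. w d * (\<Sum>k<n. K k c * W a b k d)) = (\<Sum>k<n. K k c * (\<Sum>d<n. w d * W a b k d))"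
      by (rule pull)
    have s2: "\<And>a b. (\<Sum>c<n. z c * (\<Sum>k<n. K k c * (\<Sum>d<n. w d * W a b k d))) = (\<Sum>k<n. (\<Sum>c<n. K k c * z c) * (\<Sum>d<n. w d * W a b k d))"
      by (rule pullT)
    show ?thesis by (simp only: s1 s2 ev4_def Kv_def)
  qed
  then show ?thesis by (simp only: ev4_def s3_def)
qed

lemma ev4_s4: "ev4 n (s4 n K W) x y z w = ev4 n W x y z (KT n K w)"
proof -
  have "(\<Sum>a<n. x a * (\<Sum>b<n. y b * (\<Sum>c<n. z c * (\<Sum>d<n. w d * (\<Sum>k<n. K d k * W a b c k)))))
     = ev4 n W x y z (KT n K w)"
  proof -
    have s1: "\<And>a b c. (\<Sum>d<n. w d * (\<Sum>k<n. K d k * W a b c k)) = (\<Sum>k<n. (\<Sum>d<n. K d k * w d) * W a b c k)"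
      by (rule pullT)
    show ?thesis by (simp only: s1 ev4_def KT_def)
  qed
  then show ?thesis by (simp only: ev4_def s4_def)
qed

lemma KT_vecs: "ksupp n K \<Longrightarrow> KT n K x \<in> vecs n"
  by (simp add: KT_def vecs_def ksupp_def)
lemma Kv_vecs: "ksupp n K \<Longrightarrow> Kv n K x \<in> vecs n"
  by (simp add: Kv_def vecs_def ksupp_def)
lemma KT_Idn: "x \<in> vecs n \<Longrightarrow> KT n (Idn n) x = x"
proof (intro ext)
  fix k assume x: "x \<in> vecs n"
  have "KT n (Idn n) x k = (\<Sum>a<n. Idn n a k * x a)" by (simp add: KT_def)
  also have "\<dots> = (if k < n then x k else 0)" by (rule Idn_sum2)
  also have "\<dots> = x k" using x by (simp add: vecs_def)
  finally show "KT n (Idn n) x k = x k" .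
qed
lemma Kv_Idn: "x \<in> vecs n \<Longrightarrow> Kv n (Idn n) x = x"
  by (intro ext) (auto simp: Kv_def Idn_sum1 vecs_def)
lemma KT_diff: "KT n (\<lambda>a k. A a k - B a k) x = KT n A x - KT n B x"
  by (intro ext) (simp add: KT_def left_diff_distrib sum_subtractf)
lemma Kv_diff: "Kv n (\<lambda>a k. A a k - B a k) x = Kv n A x - Kv n B x"
  by (intro ext) (simp add: Kv_def left_diff_distrib sum_subtractf)
lemma KT_add: "KT n (\<lambda>a k. A a k + B a k) x = KT n A x + KT n B x"
  by (intro ext) (simp add: KT_def distrib_right sum.distrib)
lemma Kv_add: "Kv n (\<lambda>a k. A a k + B a k) x = Kv n A x + Kv n B x"
  by (intro ext) (simp add: Kv_def distrib_right sum.distrib)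

context LS begin

definition XI :: "(nat \<Rightarrow> real) \<Rightarrow> (nat \<Rightarrow> real)" where
  "XI X = (\<lambda>i. if i < p+q then X i * sg p i else 0)"
definition P2 :: "(nat \<Rightarrow> real) \<Rightarrow> mat" where
  "P2 X = (\<lambda>a k. if a < p+q \<and> k < p+q then Z a * X k else 0)"
definition P0 :: "(nat \<Rightarrow> real) \<Rightarrow> mat" where
  "P0 X = (\<lambda>a k. if a < p+q \<and> k < p+q then X a * sg p a * U k else 0)"
definition P1 :: "(nat \<Rightarrow> real) \<Rightarrow> mat" where
  "P1 X = (\<lambda>a k. Idn (p+q) a k - P2 X a k - P0 X a k)"
definition PP :: "(nat \<Rightarrow> real) \<Rightarrow> nat \<Rightarrow> mat" where
  "PP X i = (if i = 0 then P0 X else if i = 1 then P1 X else P2 X)"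

lemma PP_supp: "ksupp (p+q) (PP X i)"
  by (auto simp: ksupp_def PP_def P0_def P1_def P2_def Idn_def)
lemma MM_supp: "ksupp (p+q) (MM X)"
  by (auto simp: ksupp_def MM_def)

lemma XI_vecs: "XI X \<in> vecs (p+q)" by (simp add: XI_def vecs_def)

lemma KT_P2: assumes X: "X \<in> vecs (p+q)" shows "KT (p+q) (P2 X) x = pairZX (p+q) Z x *\<^sub>R X"
proof (intro ext)
  fix k show "KT (p+q) (P2 X) x k = (pairZX (p+q) Z x *\<^sub>R X) k"
  proof (cases "k < p+q")
    case True then show ?thesis by (simp add: KT_def P2_def pairZX_def sum_distrib_left mult_ac)
  next
    case False then show ?thesis using X by (simp add: KT_def P2_def vecs_def)
  qed
qed
lemma KT_P0: "KT (p+q) (P0 X) x = ipm1 p q X x *\<^sub>R U"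
proof (intro ext)
  fix k show "KT (p+q) (P0 X) x k = (ipm1 p q X x *\<^sub>R U) k"
  proof (cases "k < p+q")
    case True then show ?thesis by (simp add: KT_def P0_def ipm1_def U_i sum_distrib_left mult_ac)
  next
    case False then show ?thesis by (simp add: KT_def P0_def U_i)
  qed
qed
lemma KT_P1: "X \<in> vecs (p+q) \<Longrightarrow> x \<in> vecs (p+q) \<Longrightarrow>
    KT (p+q) (P1 X) x = x - pairZX (p+q) Z x *\<^sub>R X - ipm1 p q X x *\<^sub>R U"
  unfolding P1_def KT_diff by (simp add: KT_Idn KT_P2 KT_P0)
lemma KT_MM: "X \<in> vecs (p+q) \<Longrightarrow> x \<in> vecs (p+q) \<Longrightarrow>
    KT (p+q) (MM X) x = x + pairZX (p+q) Z x *\<^sub>R X - ipm1 p q X x *\<^sub>R U"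
proof -
  assume X: "X \<in> vecs (p+q)" and x: "x \<in> vecs (p+q)"
  have "MM X = (\<lambda>a k. (\<lambda>a k. Idn (p+q) a k + P2 X a k) a k - P0 X a k)"
    by (intro ext) (auto simp: MM_def Idn_def P2_def P0_def)
  then show ?thesis by (simp only: KT_diff KT_add KT_Idn[OF x] KT_P2[OF X] KT_P0)
qed

lemma Kv_P2: "Kv (p+q) (P2 X) z = pairZX (p+q) X z *\<^sub>R Z"
proof (intro ext)
  fix k show "Kv (p+q) (P2 X) z k = (pairZX (p+q) X z *\<^sub>R Z) k"
  proof (cases "k < p+q")
    case True then show ?thesis by (simp add: Kv_def P2_def pairZX_def sum_distrib_left mult_ac)
  next
    case False then show ?thesis using Zout by (simp add: Kv_def P2_def)
  qed
qed
lemma Kv_P0: "Kv (p+q) (P0 X) z = pairZX (p+q) U z *\<^sub>R XI X"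
proof (intro ext)
  fix k show "Kv (p+q) (P0 X) z k = (pairZX (p+q) U z *\<^sub>R XI X) k"
  proof (cases "k < p+q")
    case True then show ?thesis by (simp add: Kv_def P0_def pairZX_def XI_def sum_distrib_left mult_ac)
  next
    case False then show ?thesis by (simp add: Kv_def P0_def XI_def)
  qed
qed
lemma Kv_P1: "z \<in> vecs (p+q) \<Longrightarrow>
    Kv (p+q) (P1 X) z = z - pairZX (p+q) X z *\<^sub>R Z - pairZX (p+q) U z *\<^sub>R XI X"
  unfolding P1_def Kv_diff by (simp add: Kv_Idn Kv_P2 Kv_P0)
lemma Kv_MM: "z \<in> vecs (p+q) \<Longrightarrow>
    Kv (p+q) (MM X) z = z + pairZX (p+q) X z *\<^sub>R Z - pairZX (p+q) U z *\<^sub>R XI X"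
proof -
  assume z: "z \<in> vecs (p+q)"
  have "MM X = (\<lambda>a k. (\<lambda>a k. Idn (p+q) a k + P2 X a k) a k - P0 X a k)"
    by (intro ext) (auto simp: MM_def Idn_def P2_def P0_def)
  then show ?thesis by (simp only: Kv_diff Kv_add Kv_Idn[OF z] Kv_P2 Kv_P0)
qed

lemma pairZX_comm: "pairZX n A B = pairZX n B A"
  by (simp add: pairZX_def mult.commute)

lemma XZ: "X \<in> Tset p q Z \<Longrightarrow> pairZX (p+q) X Z = 1"
  using Tset_D(2) pairZX_comm by metis
lemma UZ: "pairZX (p+q) U Z = 0"
  using ZU pairZX_comm by metis
lemma X_XI: "pairZX (p+q) X (XI X) = ipm1 p q X X"
  by (simp add: pairZX_def XI_def ipm1_def mult_ac)
lemma U_XI: "pairZX (p+q) U (XI X) = pairZX (p+q) Z X"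
  by (simp add: pairZX_def XI_def U_i mult_ac)

end

lemma numeral_times_fun: "numeral k * (f :: 'a \<Rightarrow> real) = numeral k *\<^sub>R f"
  by (rule ext) simp

context LS begin

lemma three_cases: "i < (3::nat) \<Longrightarrow> i = 0 \<or> i = 1 \<or> i = 2" by auto
lemma sum3: "(\<Sum>i<(3::nat). f i) = f 0 + f 1 + f 2"
proof -
  have "{..<(3::nat)} = {0,1,2}" by auto
  then show ?thesis by (simp add: add.assoc)
qed

lemma KT_PP_MM:
  assumes X: "X \<in> Tset p q Z" and x: "x \<in> vecs (p+q)" and i: "i < 3"
  shows "KT (p+q) (PP X i) (KT (p+q) (MM X) x) = real i *\<^sub>R KT (p+q) (PP X i) x"
proof -
  note XD = Tset_D[OF X]
  have y: "KT (p+q) (MM X) x \<in> vecs (p+q)" by (rule KT_vecs[OF MM_supp])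
  have Zy: "pairZX (p+q) Z (KT (p+q) (MM X) x) = 2 * pairZX (p+q) Z x"
    using XD by (simp add: KT_MM[OF XD(1) x] lin_simps ZU)
  have Xy: "ipm1 p q X (KT (p+q) (MM X) x) = 0"
    using XD by (simp add: KT_MM[OF XD(1) x] lin_simps XU)
  from three_cases[OF i] show ?thesis
  proof (elim disjE)
    assume "i = 0" then show ?thesis by (simp add: PP_def KT_P0 Xy)
  next
    assume i1: "i = 1"
    have PPi: "PP X i = P1 X" using i1 by (simp add: PP_def)
    show ?thesis unfolding PPi KT_P1[OF XD(1) y] Zy Xy
      using i1 by (simp add: KT_P1[OF XD(1) x] KT_MM[OF XD(1) x] algebra_simps numeral_times_fun)
  next
    assume "i = 2" then show ?thesis by (simp add: PP_def KT_P2[OF XD(1)] Zy)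
  qed
qed

lemma KT_MM_PP:
  assumes X: "X \<in> Tset p q Z" and x: "x \<in> vecs (p+q)" and i: "i < 3"
  shows "KT (p+q) (MM X) (KT (p+q) (PP X i) x) = real i *\<^sub>R KT (p+q) (PP X i) x"
proof -
  note XD = Tset_D[OF X]
  have y: "KT (p+q) (PP X i) x \<in> vecs (p+q)" by (rule KT_vecs[OF PP_supp])
  from three_cases[OF i] show ?thesis
  proof (elim disjE)
    assume i0: "i = 0"
    have e: "KT (p+q) (PP X i) x = ipm1 p q X x *\<^sub>R U" by (simp add: i0 PP_def KT_P0)
    have v: "ipm1 p q X x *\<^sub>R U \<in> vecs (p+q)" by (rule vecs_scale[OF U_vecs])
    show ?thesis unfolding e using XD i0 by (simp add: KT_MM[OF XD(1) v] lin_simps ZU XU)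
  next
    assume i1: "i = 1"
    have PPi: "PP X i = P1 X" using i1 by (simp add: PP_def)
    have y': "KT (p+q) (P1 X) x \<in> vecs (p+q)" using y by (simp add: PPi)
    have e: "KT (p+q) (P1 X) x = x - pairZX (p+q) Z x *\<^sub>R X - ipm1 p q X x *\<^sub>R U"
      by (rule KT_P1[OF XD(1) x])
    have a: "pairZX (p+q) Z (KT (p+q) (P1 X) x) = 0" using XD by (simp add: e lin_simps ZU)
    have b: "ipm1 p q X (KT (p+q) (P1 X) x) = 0" using XD by (simp add: e lin_simps XU)
    show ?thesis unfolding PPi using i1 by (simp add: KT_MM[OF XD(1) y'] a b)
  next
    assume i2: "i = 2"
    have e: "KT (p+q) (PP X i) x = pairZX (p+q) Z x *\<^sub>R X" by (simp add: i2 PP_def KT_P2[OF XD(1)])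
    have v: "pairZX (p+q) Z x *\<^sub>R X \<in> vecs (p+q)" by (rule vecs_scale[OF XD(1)])
    show ?thesis unfolding e using XD i2 by (simp add: KT_MM[OF XD(1) v] lin_simps algebra_simps numeral_times_fun)
  qed
qed

lemma Kv_PP_MM:
  assumes X: "X \<in> Tset p q Z" and z: "z \<in> vecs (p+q)" and i: "i < 3"
  shows "Kv (p+q) (PP X i) (Kv (p+q) (MM X) z) = real i *\<^sub>R Kv (p+q) (PP X i) z"
proof -
  note XD = Tset_D[OF X]
  have y: "Kv (p+q) (MM X) z \<in> vecs (p+q)" by (rule Kv_vecs[OF MM_supp])
  have Xy: "pairZX (p+q) X (Kv (p+q) (MM X) z) = 2 * pairZX (p+q) X z"
    using XD by (simp add: Kv_MM[OF z] lin_simps XZ[OF X] X_XI)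
  have Uy: "pairZX (p+q) U (Kv (p+q) (MM X) z) = 0"
    using XD by (simp add: Kv_MM[OF z] lin_simps UZ U_XI)
  from three_cases[OF i] show ?thesis
  proof (elim disjE)
    assume "i = 0" then show ?thesis by (simp add: PP_def Kv_P0 Uy)
  next
    assume i1: "i = 1"
    have PPi: "PP X i = P1 X" using i1 by (simp add: PP_def)
    show ?thesis unfolding PPi Kv_P1[OF y] Xy Uy
      using i1 by (simp add: Kv_P1[OF z] Kv_MM[OF z] algebra_simps numeral_times_fun)
  next
    assume "i = 2" then show ?thesis by (simp add: PP_def Kv_P2 Xy)
  qed
qed

lemma Kv_MM_PP:
  assumes X: "X \<in> Tset p q Z" and z: "z \<in> vecs (p+q)" and i: "i < 3"
  shows "Kv (p+q) (MM X) (Kv (p+q) (PP X i) z) = real i *\<^sub>R Kv (p+q) (PP X i) z"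
proof -
  note XD = Tset_D[OF X]
  have y: "Kv (p+q) (PP X i) z \<in> vecs (p+q)" by (rule Kv_vecs[OF PP_supp])
  from three_cases[OF i] show ?thesis
  proof (elim disjE)
    assume i0: "i = 0"
    have e: "Kv (p+q) (PP X i) z = pairZX (p+q) U z *\<^sub>R XI X" by (simp add: i0 PP_def Kv_P0)
    have v: "pairZX (p+q) U z *\<^sub>R XI X \<in> vecs (p+q)" by (rule vecs_scale[OF XI_vecs])
    show ?thesis unfolding e using XD i0 by (simp add: Kv_MM[OF v] lin_simps X_XI U_XI)
  next
    assume i1: "i = 1"
    have PPi: "PP X i = P1 X" using i1 by (simp add: PP_def)
    have y': "Kv (p+q) (P1 X) z \<in> vecs (p+q)" using y by (simp add: PPi)
    have e: "Kv (p+q) (P1 X) z = z - pairZX (p+q) X z *\<^sub>R Z - pairZX (p+q) U z *\<^sub>R XI X"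
      by (rule Kv_P1[OF z])
    have a: "pairZX (p+q) X (Kv (p+q) (P1 X) z) = 0" using XD by (simp add: e lin_simps XZ[OF X] X_XI)
    have b: "pairZX (p+q) U (Kv (p+q) (P1 X) z) = 0" using XD by (simp add: e lin_simps UZ U_XI)
    show ?thesis unfolding PPi using i1 by (simp add: Kv_MM[OF y'] a b)
  next
    assume i2: "i = 2"
    have e: "Kv (p+q) (PP X i) z = pairZX (p+q) X z *\<^sub>R Z" by (simp add: i2 PP_def Kv_P2)
    have v: "pairZX (p+q) X z *\<^sub>R Z \<in> vecs (p+q)" by (rule vecs_scale[OF Zin])
    show ?thesis unfolding e using XD i2 by (simp add: Kv_MM[OF v] lin_simps XZ[OF X] UZ algebra_simps numeral_times_fun)
  qed
qed

lemma KT_PP_sum: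
  assumes X: "X \<in> Tset p q Z" and x: "x \<in> vecs (p+q)"
  shows "(\<Sum>i<3. KT (p+q) (PP X i) x) = x"
proof -
  note XD = Tset_D[OF X]
  have "(\<Sum>i<3. KT (p+q) (PP X i) x) = KT (p+q) (PP X 0) x + KT (p+q) (PP X 1) x + KT (p+q) (PP X 2) x"
    by (rule sum3)
  also have "\<dots> = x" by (simp add: PP_def KT_P0 KT_P1[OF XD(1) x] KT_P2[OF XD(1)])
  finally show ?thesis .
qed

lemma Kv_PP_sum:
  assumes z: "z \<in> vecs (p+q)"
  shows "(\<Sum>i<3. Kv (p+q) (PP X i) z) = z"
proof -
  have "(\<Sum>i<3. Kv (p+q) (PP X i) z) = Kv (p+q) (PP X 0) z + Kv (p+q) (PP X 1) z + Kv (p+q) (PP X 2) z"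
    by (rule sum3)
  also have "\<dots> = z" by (simp add: PP_def Kv_P0 Kv_P1[OF z] Kv_P2)
  finally show ?thesis .
qed

end

lemma box4_s1: "box4 n W \<Longrightarrow> ksupp n K \<Longrightarrow> box4 n (s1 n K W)"
  by (auto simp: box4_def ksupp_def s1_def intro!: sum.neutral)
lemma box4_s2: "box4 n W \<Longrightarrow> ksupp n K \<Longrightarrow> box4 n (s2 n K W)"
  by (auto simp: box4_def ksupp_def s2_def intro!: sum.neutral)
lemma box4_s3: "box4 n W \<Longrightarrow> ksupp n K \<Longrightarrow> box4 n (s3 n K W)"
  by (auto simp: box4_def ksupp_def s3_def intro!: sum.neutral)
lemma box4_s4: "box4 n W \<Longrightarrow> ksupp n K \<Longrightarrow> box4 n (s4 n K W)"
  by (auto simp: box4_def ksupp_def s4_def intro!: sum.neutral)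
lemma box4_wact: "box4 n W \<Longrightarrow> ksupp n K \<Longrightarrow> box4 n (wact n K W)"
  by (auto simp: box4_def ksupp_def wact_def intro!: sum.neutral)
lemma box4_scale: "box4 n W \<Longrightarrow> box4 n (r *\<^sub>R W)"
  by (simp add: box4_def)
lemma box4_zero: "box4 n 0"
  by (simp add: box4_def)
lemma box4_sum: "(\<And>t. t \<in> A \<Longrightarrow> box4 n (g t)) \<Longrightarrow> box4 n (sum g A)"
  by (induct A rule: infinite_finite_induct) (auto simp: box4_def)
lemma weyl_box: "W \<in> weyl p q \<Longrightarrow> box4 (p+q) W"
  using weyl_D(1) by (auto simp: box4_def)

lemma unitv_vecs: "a < n \<Longrightarrow> unitv a \<in> vecs n"
  by (simp add: unitv_def vecs_def)

context LS begin

definition E4 :: "(nat \<Rightarrow> real) \<Rightarrow> nat \<times> nat \<times> nat \<times> nat \<Rightarrow> t4 \<Rightarrow> t4" where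
  "E4 X t W = (case t of (i, j, k, l) \<Rightarrow>
     s1 (p+q) (PP X i) (s2 (p+q) (PP X j) (s3 (p+q) (PP X k) (s4 (p+q) (PP X l) W))))"

definition mu4 :: "nat \<times> nat \<times> nat \<times> nat \<Rightarrow> real" where
  "mu4 t = (case t of (i, j, k, l) \<Rightarrow> real i + real j - real k + real l)"

definition T4 :: "(nat \<times> nat \<times> nat \<times> nat) set" where
  "T4 = {..<3} \<times> {..<3} \<times> {..<3} \<times> {..<3}"

lemma T4_finite: "finite T4" by (simp add: T4_def)

lemma ev4_E4: "ev4 (p+q) (E4 X (i,j,k,l) W) x y z w =
   ev4 (p+q) W (KT (p+q) (PP X i) x) (KT (p+q) (PP X j) y) (Kv (p+q) (PP X k) z) (KT (p+q) (PP X l) w)"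
  by (simp only: E4_def prod.case ev4_s1 ev4_s2 ev4_s3 ev4_s4)

lemma E4_box: "box4 (p+q) W \<Longrightarrow> box4 (p+q) (E4 X t W)"
  by (cases t) (simp add: E4_def box4_s1 box4_s2 box4_s3 box4_s4 PP_supp)

lemma E4_eig:
  assumes X: "X \<in> Tset p q Z" and W: "box4 (p+q) W" and t: "t \<in> T4"
  shows "wact (p+q) (MM X) (E4 X t W) = mu4 t *\<^sub>R E4 X t W"
proof -
  obtain i j k l where tt: "t = (i,j,k,l)" by (cases t) auto
  have ijkl: "i < 3" "j < 3" "k < 3" "l < 3" using t by (auto simp: T4_def tt)
  show ?thesis
  proof (rule box4_ext)
    show "box4 (p+q) (wact (p+q) (MM X) (E4 X t W))" by (intro box4_wact E4_box W MM_supp)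
    show "box4 (p+q) (mu4 t *\<^sub>R E4 X t W)" by (intro box4_scale E4_box W)
  next
    fix a b c d assume abcd: "a < p+q" "b < p+q" "c < p+q" "d < p+q"
    note u = unitv_vecs[OF abcd(1)] unitv_vecs[OF abcd(2)] unitv_vecs[OF abcd(3)] unitv_vecs[OF abcd(4)]
    show "ev4 (p+q) (wact (p+q) (MM X) (E4 X t W)) (unitv a) (unitv b) (unitv c) (unitv d) =
          ev4 (p+q) (mu4 t *\<^sub>R E4 X t W) (unitv a) (unitv b) (unitv c) (unitv d)"
      unfolding ev4_wact ev4_Wscale tt ev4_E4
        KT_PP_MM[OF X u(1) ijkl(1)] KT_PP_MM[OF X u(2) ijkl(2)] Kv_PP_MM[OF X u(3) ijkl(3)]
        KT_PP_MM[OF X u(4) ijkl(4)]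
      by (simp add: ev4_lin mu4_def algebra_simps)
  qed
qed

lemma E4_comm:
  assumes X: "X \<in> Tset p q Z" and W: "box4 (p+q) W" and t: "t \<in> T4"
  shows "E4 X t (wact (p+q) (MM X) W) = mu4 t *\<^sub>R E4 X t W"
proof -
  obtain i j k l where tt: "t = (i,j,k,l)" by (cases t) auto
  have ijkl: "i < 3" "j < 3" "k < 3" "l < 3" using t by (auto simp: T4_def tt)
  show ?thesis
  proof (rule box4_ext)
    show "box4 (p+q) (E4 X t (wact (p+q) (MM X) W))" by (intro box4_wact E4_box W MM_supp)
    show "box4 (p+q) (mu4 t *\<^sub>R E4 X t W)" by (intro box4_scale E4_box W)
  next
    fix a b c d assume abcd: "a < p+q" "b < p+q" "c < p+q" "d < p+q"
    note u = unitv_vecs[OF abcd(1)] unitv_vecs[OF abcd(2)] unitv_vecs[OF abcd(3)] unitv_vecs[OF abcd(4)]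
    show "ev4 (p+q) (E4 X t (wact (p+q) (MM X) W)) (unitv a) (unitv b) (unitv c) (unitv d) =
          ev4 (p+q) (mu4 t *\<^sub>R E4 X t W) (unitv a) (unitv b) (unitv c) (unitv d)"
      unfolding ev4_Wscale tt ev4_E4 ev4_wact
        KT_MM_PP[OF X u(1) ijkl(1)] KT_MM_PP[OF X u(2) ijkl(2)] Kv_MM_PP[OF X u(3) ijkl(3)]
        KT_MM_PP[OF X u(4) ijkl(4)]
      by (simp add: ev4_lin mu4_def algebra_simps)
  qed
qed

lemma sum_T4: "(\<Sum>t\<in>T4. f t) = (\<Sum>i<3. \<Sum>j<3. \<Sum>k<3. \<Sum>l<3. f (i,j,k,l))"
  by (simp add: T4_def sum.cartesian_product)

lemma E4_sum:
  assumes X: "X \<in> Tset p q Z" and W: "box4 (p+q) W"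
  shows "(\<Sum>t\<in>T4. E4 X t W) = W"
proof (rule box4_ext)
  show "box4 (p+q) (\<Sum>t\<in>T4. E4 X t W)" by (intro box4_sum E4_box W)
  show "box4 (p+q) W" by (rule W)
next
  fix a b c d assume abcd: "a < p+q" "b < p+q" "c < p+q" "d < p+q"
  note u = unitv_vecs[OF abcd(1)] unitv_vecs[OF abcd(2)] unitv_vecs[OF abcd(3)] unitv_vecs[OF abcd(4)]
  show "ev4 (p+q) (\<Sum>t\<in>T4. E4 X t W) (unitv a) (unitv b) (unitv c) (unitv d) =
        ev4 (p+q) W (unitv a) (unitv b) (unitv c) (unitv d)"
    unfolding ev4_Wsum sum_T4 ev4_E4
    by (simp only: ev4_sum1[symmetric] ev4_sum2[symmetric] ev4_sum3[symmetric] ev4_sum4[symmetric]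
        KT_PP_sum[OF X u(1)] KT_PP_sum[OF X u(2)] Kv_PP_sum[OF u(3)] KT_PP_sum[OF X u(4)])
qed

end

lemma s1_scale: "s1 n K (r *\<^sub>R W) = r *\<^sub>R s1 n K W"
  by (intro ext) (simp add: s1_def sum_distrib_left mult_ac)
lemma s2_scale: "s2 n K (r *\<^sub>R W) = r *\<^sub>R s2 n K W"
  by (intro ext) (simp add: s2_def sum_distrib_left mult_ac)
lemma s3_scale: "s3 n K (r *\<^sub>R W) = r *\<^sub>R s3 n K W"
  by (intro ext) (simp add: s3_def sum_distrib_left mult_ac)
lemma s4_scale: "s4 n K (r *\<^sub>R W) = r *\<^sub>R s4 n K W"
  by (intro ext) (simp add: s4_def sum_distrib_left mult_ac)

lemma ev4_anti:
  assumes W: "W \<in> weyl p q"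
  shows "ev4 (p+q) W x y z w = - ev4 (p+q) W y x z w"
proof -
  define R where "R a b = (\<Sum>c<p+q. z c * (\<Sum>d<p+q. w d * W a b c d))" for a b
  have hh: "\<And>a b c d. W b a c d = - W a b c d" using weyl_D(2)[OF W] by metis
  have Ra: "R b a = - R a b" for a b
    unfolding R_def by (simp add: hh[of a b] sum_negf)
  have e1: "ev4 (p+q) W x y z w = (\<Sum>a<p+q. \<Sum>b<p+q. x a * y b * R a b)"
    by (simp add: ev4_def R_def sum_distrib_left mult.assoc)
  have e2: "ev4 (p+q) W y x z w = (\<Sum>a<p+q. \<Sum>b<p+q. y a * x b * R a b)"
    by (simp add: ev4_def R_def sum_distrib_left mult.assoc)
  have "(\<Sum>a<p+q. \<Sum>b<p+q. y a * x b * R a b) = (\<Sum>b<p+q. \<Sum>a<p+q. y a * x b * R a b)"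
    by (rule sum.swap)
  also have "\<dots> = - (\<Sum>a<p+q. \<Sum>b<p+q. x a * y b * R a b)"
    unfolding sum_negf[symmetric]
  proof (intro sum.cong refl)
    fix a b show "y b * x a * R b a = - (x a * y b * R a b)" unfolding Ra[of b a] by (simp add: mult_ac)
  qed
  finally show ?thesis using e1 e2 by simp
qed

context LS begin

definition Iv :: "(nat \<Rightarrow> real) \<Rightarrow> (nat \<Rightarrow> real)" where
  "Iv v = (\<lambda>i. if i < p+q then sg p i * v i else 0)"

lemma Iv_U: "Iv U = Z"
  using Zout by (intro ext) (auto simp: Iv_def U_i)
lemma Iv_Z: "Iv Z = U"
  by (intro ext) (auto simp: Iv_def U_i)

lemma ev4_so:
  assumes W: "W \<in> weyl p q"
  shows "ev4 (p+q) W x y z w = - ev4 (p+q) W x y (Iv w) (Iv z)"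
proof -
  have h: "\<And>a b c d. sg p c * W a b c d = - (sg p d * W a b d c)" using weyl_D(3)[OF W] by metis
  have hh: "W a b c d = - (sg p c * sg p d * W a b d c)" for a b c d
    using arg_cong[OF h[of c a b d], of "(*) (sg p c)"] by (simp add: mult_ac)
  define Q where "Q a b = (\<Sum>c<p+q. z c * (\<Sum>d<p+q. w d * W a b c d))" for a b
  define Q' where "Q' a b = (\<Sum>c<p+q. Iv w c * (\<Sum>d<p+q. Iv z d * W a b c d))" for a b
  have QQ: "Q' a b = - Q a b" for a b
  proof -
    have "Q' a b = (\<Sum>c<p+q. \<Sum>d<p+q. sg p c * w c * (sg p d * z d * W a b c d))"
      by (simp add: Q'_def Iv_def sum_distrib_left)
    also have "\<dots> = (\<Sum>c<p+q. \<Sum>d<p+q. - (w c * z d * W a b d c))"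
    proof (intro sum.cong refl)
      fix c d
      show "sg p c * w c * (sg p d * z d * W a b c d) = - (w c * z d * W a b d c)"
        unfolding hh[of a b c d] by (simp add: mult_ac)
    qed
    also have "\<dots> = (\<Sum>d<p+q. \<Sum>c<p+q. - (w c * z d * W a b d c))"
      by (rule sum.swap)
    also have "\<dots> = - Q a b"
      by (simp add: Q_def sum_negf sum_distrib_left mult_ac)
    finally show ?thesis .
  qed
  have "ev4 (p+q) W x y (Iv w) (Iv z) = (\<Sum>a<p+q. x a * (\<Sum>b<p+q. y b * Q' a b))"
    by (simp add: ev4_def Q'_def)
  also have "\<dots> = - (\<Sum>a<p+q. x a * (\<Sum>b<p+q. y b * Q a b))"
    by (simp add: QQ sum_negf)
  also have "(\<Sum>a<p+q. x a * (\<Sum>b<p+q. y b * Q a b)) = ev4 (p+q) W x y z w"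
    by (simp add: ev4_def Q_def)
  finally show ?thesis by simp
qed

lemma ev4_UU: "W \<in> weyl p q \<Longrightarrow> ev4 (p+q) W U U z w = 0"
  using ev4_anti[of W p q U U z w] by simp

lemma ev4_ZU: "W \<in> weyl p q \<Longrightarrow> ev4 (p+q) W x y Z U = 0"
  using ev4_so[of W x y Z U] by (simp add: Iv_U Iv_Z)

lemma E4_zero_iff: "box4 (p+q) W \<Longrightarrow> (\<And>a b c d. a < p+q \<Longrightarrow> b < p+q \<Longrightarrow> c < p+q \<Longrightarrow> d < p+q \<Longrightarrow>
   ev4 (p+q) (E4 X t W) (unitv a) (unitv b) (unitv c) (unitv d) = 0) \<Longrightarrow> E4 X t W = 0"
  by (rule box4_ext) (auto intro: E4_box box4_zero simp: ev4_Wzero)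

lemma E4_van:
  assumes X: "X \<in> Tset p q Z" and W: "W \<in> weyl p q"
    and t: "t = (i,j,k,l)" and c: "(i = 0 \<and> j = 0) \<or> (k = 2 \<and> l = 0)"
  shows "E4 X t W = 0"
proof (rule E4_zero_iff[OF weyl_box[OF W]])
  note XD = Tset_D[OF X]
  fix a b c' d
  from c show "ev4 (p+q) (E4 X t W) (unitv a) (unitv b) (unitv c') (unitv d) = 0"
  proof
    assume "i = 0 \<and> j = 0"
    then show ?thesis unfolding t ev4_E4 by (simp add: PP_def KT_P0 ev4_lin ev4_UU[OF W])
  next
    assume "k = 2 \<and> l = 0"
    then show ?thesis unfolding t ev4_E4 by (simp add: PP_def KT_P0 Kv_P2 ev4_lin ev4_ZU[OF W])
  qed
qed

lemma E4_scale: "E4 X t (r *\<^sub>R W) = r *\<^sub>R E4 X t W"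
  by (cases t) (simp add: E4_def s1_scale s2_scale s3_scale s4_scale)

lemma weyl_neg_zero:
  assumes X: "X \<in> Tset p q Z" and W: "W \<in> weyl p q" and c: "c < 0"
    and ev: "wact (p+q) (MM X) W = c *\<^sub>R W"
  shows "W = 0"
proof -
  have "\<forall>t\<in>T4. E4 X t W = 0"
  proof
    fix t assume t: "t \<in> T4"
    obtain i j k l where tt: "t = (i,j,k,l)" by (cases t) auto
    have ijkl: "i < 3" "j < 3" "k < 3" "l < 3" using t by (auto simp: T4_def tt)
    have "mu4 t *\<^sub>R E4 X t W = c *\<^sub>R E4 X t W"
      using E4_comm[OF X weyl_box[OF W] t] ev E4_scale by metis
    then have e: "(mu4 t - c) *\<^sub>R E4 X t W = 0" by (simp add: algebra_simps)
    show "E4 X t W = 0"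
    proof (cases "mu4 t = c")
      case False then show ?thesis using e by simp
    next
      case True
      then have "real i + real j - real k + real l < 0" using c by (simp add: mu4_def tt)
      then have "(i = 0 \<and> j = 0) \<or> (k = 2 \<and> l = 0)" using ijkl by linarith
      then show ?thesis by (rule E4_van[OF X W tt])
    qed
  qed
  then have "(\<Sum>t\<in>T4. E4 X t W) = 0" by simp
  then show ?thesis using E4_sum[OF X weyl_box[OF W]] by simp
qed

lemma weyl_diag:
  assumes X: "X \<in> Tset p q Z"
  shows "diagonalizable_on (wact (p+q) (MM X)) (weyl p q)"
proof (rule diag_from_decomp[OF wact_linear weyl_subspace])
  show "wact (p+q) (MM X) ` weyl p q \<subseteq> weyl p q" using weyl_inv by auto
next
  fix W assume W: "W \<in> weyl p q"
  define G where "G l = (\<Sum>t\<in>{t\<in>T4. mu4 t = l}. E4 X t W)" for l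
  have "finite (mu4 ` T4)" using T4_finite by simp
  moreover have "\<forall>l\<in>mu4 ` T4. wact (p+q) (MM X) (G l) = l *\<^sub>R G l"
  proof
    fix l assume "l \<in> mu4 ` T4"
    have "wact (p+q) (MM X) (G l) = (\<Sum>t\<in>{t\<in>T4. mu4 t = l}. wact (p+q) (MM X) (E4 X t W))"
      unfolding G_def by (rule linear_sum[OF wact_linear])
    also have "\<dots> = (\<Sum>t\<in>{t\<in>T4. mu4 t = l}. l *\<^sub>R E4 X t W)"
      by (rule sum.cong[OF refl]) (simp add: E4_eig[OF X weyl_box[OF W]])
    also have "\<dots> = l *\<^sub>R G l" by (simp add: G_def scaleR_sum_right)
    finally show "wact (p+q) (MM X) (G l) = l *\<^sub>R G l" .
  qed
  moreover have "W = sum G (mu4 ` T4)"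
    unfolding G_def using sum.image_gen[OF T4_finite, of "\<lambda>t. E4 X t W" mu4] E4_sum[OF X weyl_box[OF W]]
    by simp
  ultimately show "\<exists>L G. finite L \<and> (\<forall>l\<in>L. wact (p+q) (MM X) (G l) = l *\<^sub>R G l) \<and> W = sum G L"
    by blast
qed

end

context LS begin

lemma ipm1_add1: "ipm1 p q (f + g) X = ipm1 p q f X + ipm1 p q g X"
  by (simp add: ipm1_sym[of "f+g"] ipm1_sym[of f] ipm1_sym[of g] lin_simps)
lemma ipm1_diff1: "ipm1 p q (f - g) X = ipm1 p q f X - ipm1 p q g X"
  by (simp add: ipm1_sym[of "f-g"] ipm1_sym[of f] ipm1_sym[of g] lin_simps)
lemma ipm1_scale1: "ipm1 p q (c *\<^sub>R f) X = c * ipm1 p q f X"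
  by (simp add: ipm1_sym[of "c *\<^sub>R f"] ipm1_sym[of f] lin_simps)
lemma ipm1_01: "ipm1 p q 0 X = 0" by (simp add: ipm1_def)
lemmas lin1_simps = ipm1_add1 ipm1_diff1 ipm1_scale1 ipm1_01

lemma UX: "ipm1 p q U X = pairZX (p+q) Z X"
  using XU ipm1_sym by metis

lemma T_nonempty: "\<exists>X. X \<in> Tset p q Z"
proof -
  obtain j where j: "j < p+q" "Z j \<noteq> 0" using j0_ex by blast
  define e where "e = (1 / Z j) *\<^sub>R unitv j"
  define X where "X = e - (ipm1 p q e e / 2) *\<^sub>R U"
  have ev: "e \<in> vecs (p+q)" unfolding e_def by (intro vecs_scale unitv_vecs j)
  have Ze: "pairZX (p+q) Z e = 1" using j by (simp add: e_def lin_simps pairZX_unitv2)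
  have Xv: "X \<in> vecs (p+q)" unfolding X_def by (intro vecs_diff vecs_scale ev U_vecs)
  have ZX: "pairZX (p+q) Z X = 1" by (simp add: X_def lin_simps Ze ZU)
  have eU: "ipm1 p q e U = 1" using XU[of e] Ze by simp
  have UU2: "ipm1 p q U U = 0" by (rule UU)
  have "ipm1 p q X X = 0"
    by (simp add: X_def lin_simps lin1_simps eU UX Ze UU2 ipm1_sym[of U e] ZU algebra_simps)
  then show ?thesis using Xv ZX by (auto simp: Tset_char)
qed

definition perp :: "(nat \<Rightarrow> real) \<Rightarrow> (nat \<Rightarrow> real) set" where
  "perp X = {v \<in> vecs (p+q). pairZX (p+q) Z v = 0 \<and> ipm1 p q X v = 0}"
definition perp' :: "(nat \<Rightarrow> real) \<Rightarrow> (nat \<Rightarrow> real) set" where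
  "perp' X = {v \<in> vecs (p+q). pairZX (p+q) X v = 0 \<and> pairZX (p+q) U v = 0}"

lemma KT_P1_perp: "X \<in> Tset p q Z \<Longrightarrow> x \<in> vecs (p+q) \<Longrightarrow> KT (p+q) (P1 X) x \<in> perp X"
proof -
  assume X: "X \<in> Tset p q Z" and x: "x \<in> vecs (p+q)"
  note XD = Tset_D[OF X]
  have e: "KT (p+q) (P1 X) x = x - pairZX (p+q) Z x *\<^sub>R X - ipm1 p q X x *\<^sub>R U"
    by (rule KT_P1[OF XD(1) x])
  have v: "KT (p+q) (P1 X) x \<in> vecs (p+q)"
    using KT_vecs[OF PP_supp, of X 1] by (simp add: PP_def)
  show ?thesis unfolding perp_def using v XD by (simp add: e lin_simps ZU XU)
qed

lemma Kv_P1_perp': "X \<in> Tset p q Z \<Longrightarrow> z \<in> vecs (p+q) \<Longrightarrow> Kv (p+q) (P1 X) z \<in> perp' X"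
proof -
  assume X: "X \<in> Tset p q Z" and z: "z \<in> vecs (p+q)"
  note XD = Tset_D[OF X]
  have e: "Kv (p+q) (P1 X) z = z - pairZX (p+q) X z *\<^sub>R Z - pairZX (p+q) U z *\<^sub>R XI X"
    by (rule Kv_P1[OF z])
  have v: "Kv (p+q) (P1 X) z \<in> vecs (p+q)"
    using Kv_vecs[OF PP_supp, of X 1] by (simp add: PP_def)
  show ?thesis unfolding perp'_def using v XD by (simp add: e lin_simps XZ[OF X] X_XI UZ U_XI)
qed

lemma Iv_perp: "v \<in> perp X \<Longrightarrow> Iv v \<in> perp' X"
proof -
  assume v: "v \<in> perp X"
  have a: "pairZX (p+q) X (Iv v) = ipm1 p q X v" by (simp add: pairZX_def Iv_def ipm1_def mult_ac)
  have b: "pairZX (p+q) U (Iv v) = pairZX (p+q) Z v" by (simp add: pairZX_def Iv_def U_i mult_ac)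
  have c: "Iv v \<in> vecs (p+q)" by (simp add: vecs_def Iv_def)
  show ?thesis using v c unfolding perp_def perp'_def by (simp add: a b)
qed

lemma Xprime_T:
  assumes X: "X \<in> Tset p q Z" and Y: "Y \<in> perp X"
  shows "X + Y - (ipm1 p q Y Y / 2) *\<^sub>R U \<in> Tset p q Z"
proof -
  note XD = Tset_D[OF X]
  have Yv: "Y \<in> vecs (p+q)" and ZY: "pairZX (p+q) Z Y = 0" and XY: "ipm1 p q X Y = 0"
    using Y by (auto simp: perp_def)
  have YX: "ipm1 p q Y X = 0" using XY ipm1_sym by metis
  have v: "X + Y - (ipm1 p q Y Y / 2) *\<^sub>R U \<in> vecs (p+q)"
    by (intro vecs_diff vecs_add vecs_scale XD(1) Yv U_vecs)
  have z: "pairZX (p+q) Z (X + Y - (ipm1 p q Y Y / 2) *\<^sub>R U) = 1"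
    using XD by (simp add: lin_simps ZY ZU)
  have "ipm1 p q (X + Y - (ipm1 p q Y Y / 2) *\<^sub>R U) (X + Y - (ipm1 p q Y Y / 2) *\<^sub>R U) = 0"
    using XD by (simp add: lin_simps lin1_simps XY YX XU UX ZY UU ZU algebra_simps)
  then show ?thesis using v z by (auto simp: Tset_char)
qed

end

context LS begin

lemma rel_Y:
  assumes X: "X \<in> Tset p q Z" and W: "W \<in> weyl p q" and Y: "Y \<in> perp X"
    and kill: "wact (p+q) (MM (X + Y - (ipm1 p q Y Y / 2) *\<^sub>R U)) W = 0"
    and w1: "w1 \<in> perp X" and w2: "w2 \<in> perp X" and w': "w' \<in> perp' X"
  shows "ev4 (p+q) W w1 w2 w' U - ipm1 p q Y w1 * ev4 (p+q) W U w2 w' U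
         - ipm1 p q Y w2 * ev4 (p+q) W w1 U w' U = 0"
proof -
  define X' where "X' = X + Y - (ipm1 p q Y Y / 2) *\<^sub>R U"
  have X'T: "X' \<in> Tset p q Z" unfolding X'_def by (rule Xprime_T[OF X Y])
  note XD' = Tset_D[OF X'T]
  note XD = Tset_D[OF X]
  have w1v: "w1 \<in> vecs (p+q)" "pairZX (p+q) Z w1 = 0" "ipm1 p q X w1 = 0" using w1 by (auto simp: perp_def)
  have w2v: "w2 \<in> vecs (p+q)" "pairZX (p+q) Z w2 = 0" "ipm1 p q X w2 = 0" using w2 by (auto simp: perp_def)
  have w'v: "w' \<in> vecs (p+q)" "pairZX (p+q) U w' = 0" using w' by (auto simp: perp'_def)
  have X'w: "ipm1 p q X' w = ipm1 p q Y w" if "w \<in> perp X" for w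
    using that by (simp add: X'_def perp_def lin1_simps UX)
  have k1: "KT (p+q) (MM X') w1 = w1 - ipm1 p q Y w1 *\<^sub>R U"
    using KT_MM[OF XD'(1) w1v(1)] X'w[OF w1] w1v by simp
  have k2: "KT (p+q) (MM X') w2 = w2 - ipm1 p q Y w2 *\<^sub>R U"
    using KT_MM[OF XD'(1) w2v(1)] X'w[OF w2] w2v by simp
  have k4: "KT (p+q) (MM X') U = 0"
    using KT_MM[OF XD'(1) U_vecs] XD' by (simp add: ZU XU)
  have k3: "Kv (p+q) (MM X') w' = w' + pairZX (p+q) X' w' *\<^sub>R Z"
    using Kv_MM[OF w'v(1), of X'] w'v by simp
  have "0 = ev4 (p+q) (wact (p+q) (MM X') W) w1 w2 w' U"
    using kill by (simp add: X'_def ev4_Wzero)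
  also have "\<dots> = ev4 (p+q) W w1 w2 w' U - ipm1 p q Y w1 * ev4 (p+q) W U w2 w' U
         - ipm1 p q Y w2 * ev4 (p+q) W w1 U w' U"
    unfolding ev4_wact k1 k2 k3 k4 by (simp add: ev4_lin ev4_ZU[OF W])
  finally show ?thesis by simp
qed

lemma rel:
  assumes X: "X \<in> Tset p q Z" and W: "W \<in> weyl p q"
    and kill: "\<forall>X'\<in>Tset p q Z. wact (p+q) (MM X') W = 0"
    and Y: "Y \<in> perp X" and w1: "w1 \<in> perp X" and w2: "w2 \<in> perp X" and w': "w' \<in> perp' X"
  shows "ipm1 p q Y w1 * ev4 (p+q) W w2 U w' U = ipm1 p q Y w2 * ev4 (p+q) W w1 U w' U"
proof -
  have Y0: "0 \<in> perp X" by (simp add: perp_def vecs_def lin_simps)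
  have a: "ev4 (p+q) W w1 w2 w' U - ipm1 p q Y w1 * ev4 (p+q) W U w2 w' U
         - ipm1 p q Y w2 * ev4 (p+q) W w1 U w' U = 0"
    by (rule rel_Y[OF X W Y _ w1 w2 w']) (use kill Xprime_T[OF X Y] in blast)
  have b: "ev4 (p+q) W w1 w2 w' U - ipm1 p q 0 w1 * ev4 (p+q) W U w2 w' U
         - ipm1 p q 0 w2 * ev4 (p+q) W w1 U w' U = 0"
    by (rule rel_Y[OF X W Y0 _ w1 w2 w']) (use kill Xprime_T[OF X Y0] in blast)
  have b': "ev4 (p+q) W w1 w2 w' U = 0" using b by (simp add: ipm1_01)
  have an: "ev4 (p+q) W U w2 w' U = - ev4 (p+q) W w2 U w' U" by (rule ev4_anti[OF W])
  show ?thesis using a b' an by (simp add: algebra_simps)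
qed

end

context LS begin

lemma ipm1_unitv1: "ipm1 p q (unitv m) w = (if m < p+q then sg p m * w m else 0)"
  by (simp add: ipm1_def unitv_def if_distrib[of "\<lambda>x. x * _"] cong: if_cong)

definition vm :: "(nat \<Rightarrow> real) \<Rightarrow> nat \<Rightarrow> (nat \<Rightarrow> real)" where
  "vm X m = KT (p+q) (P1 X) (unitv m)"

lemma vm_eq: "X \<in> Tset p q Z \<Longrightarrow> m < p+q \<Longrightarrow> vm X m = unitv m - Z m *\<^sub>R X - (X m * sg p m) *\<^sub>R U"
  unfolding vm_def using Tset_D
  by (simp add: KT_P1 unitv_vecs pairZX_unitv2 ipm1_unitv)

lemma vm_perp: "X \<in> Tset p q Z \<Longrightarrow> m < p+q \<Longrightarrow> vm X m \<in> perp X"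
  unfolding vm_def by (rule KT_P1_perp) (auto intro: unitv_vecs)

lemma V1: assumes X: "X \<in> Tset p q Z" and m: "m < p+q" and w: "w \<in> perp X"
  shows "ipm1 p q (vm X m) w = sg p m * w m"
  using w m by (simp add: vm_eq[OF X m] lin1_simps ipm1_unitv1 UX perp_def)

lemma V2: assumes X: "X \<in> Tset p q Z" and w: "w \<in> perp X"
  shows "(\<Sum>m<p+q. (sg p m * ipm1 p q (vm X m) w) *\<^sub>R vm X m) = w"
proof (intro ext)
  fix i
  note XD = Tset_D[OF X]
  have wv: "w \<in> vecs (p+q)" and Zw: "pairZX (p+q) Z w = 0" and Xw: "ipm1 p q X w = 0"
    using w by (auto simp: perp_def)
  have "(\<Sum>m<p+q. (sg p m * ipm1 p q (vm X m) w) *\<^sub>R vm X m) i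
      = (\<Sum>m<p+q. w m * (unitv m i - Z m * X i - X m * sg p m * U i))"
  proof -
    have "(\<Sum>m<p+q. (sg p m * ipm1 p q (vm X m) w) *\<^sub>R vm X m) i
        = (\<Sum>m<p+q. (sg p m * ipm1 p q (vm X m) w) * vm X m i)" by (simp add: sum_apply)
    also have "\<dots> = (\<Sum>m<p+q. w m * (unitv m i - Z m * X i - X m * sg p m * U i))"
    proof (rule sum.cong[OF refl])
      fix m assume "m \<in> {..<p+q}"
      then have m: "m < p+q" by simp
      show "sg p m * ipm1 p q (vm X m) w * vm X m i = w m * (unitv m i - Z m * X i - X m * sg p m * U i)"
        unfolding V1[OF X m w] unfolding vm_eq[OF X m] by simp
    qed
    finally show ?thesis .
  qed
  also have "\<dots> = (\<Sum>m<p+q. w m * unitv m i) - pairZX (p+q) Z w * X i - ipm1 p q X w * U i"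
    by (simp add: pairZX_def ipm1_def right_diff_distrib sum_subtractf sum_distrib_left mult_ac)
  also have "\<dots> = w i"
    using wv by (simp add: Zw Xw unitv_def vecs_def if_distrib[of "\<lambda>x. _ * x"] cong: if_cong)
  finally show "(\<Sum>m<p+q. (sg p m * ipm1 p q (vm X m) w) *\<^sub>R vm X m) i = w i" .
qed

lemma V3: assumes X: "X \<in> Tset p q Z"
  shows "(\<Sum>m<p+q. sg p m * ipm1 p q (vm X m) (vm X m)) = real (p+q) - 2"
proof -
  note XD = Tset_D[OF X]
  have "(\<Sum>m<p+q. sg p m * ipm1 p q (vm X m) (vm X m)) = (\<Sum>m<p+q. 1 - 2 * (Z m * X m))"
  proof (rule sum.cong[OF refl])
    fix m assume "m \<in> {..<p+q}"
    then have m: "m < p+q" by simp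
    have "ipm1 p q (vm X m) (vm X m) = sg p m * vm X m m" by (rule V1[OF X m vm_perp[OF X m]])
    also have "vm X m m = 1 - 2 * (Z m * X m)"
      using m by (simp add: vm_eq[OF X m] unitv_def U_i algebra_simps)
    finally show "sg p m * ipm1 p q (vm X m) (vm X m) = 1 - 2 * (Z m * X m)" by simp
  qed
  also have "\<dots> = real (p+q) - 2 * pairZX (p+q) Z X"
    by (simp add: sum_subtractf pairZX_def sum_distrib_left)
  finally show ?thesis using XD by simp
qed

lemma S_zero:
  assumes X: "X \<in> Tset p q Z" and W: "W \<in> weyl p q" and n4: "p+q \<ge> 4"
    and kill: "\<forall>X'\<in>Tset p q Z. wact (p+q) (MM X') W = 0"
    and w: "w \<in> perp X" and w': "w' \<in> perp' X"
  shows "ev4 (p+q) W w U w' U = 0"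
proof -
  have r: "ipm1 p q (vm X m) (vm X m) * ev4 (p+q) W w U w' U = ipm1 p q (vm X m) w * ev4 (p+q) W (vm X m) U w' U"
    if m: "m < p+q" for m
    by (rule rel[OF X W kill vm_perp[OF X m] vm_perp[OF X m] w w'])
  have "(real (p+q) - 2) * ev4 (p+q) W w U w' U
      = (\<Sum>m<p+q. sg p m * ipm1 p q (vm X m) (vm X m)) * ev4 (p+q) W w U w' U"
    by (simp add: V3[OF X])
  also have "\<dots> = (\<Sum>m<p+q. sg p m * (ipm1 p q (vm X m) (vm X m) * ev4 (p+q) W w U w' U))"
    by (subst sum_distrib_right) (simp add: mult_ac)
  also have "\<dots> = (\<Sum>m<p+q. sg p m * (ipm1 p q (vm X m) w * ev4 (p+q) W (vm X m) U w' U))"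
    by (rule sum.cong[OF refl]) (simp add: r)
  also have "\<dots> = (\<Sum>m<p+q. ev4 (p+q) W ((sg p m * ipm1 p q (vm X m) w) *\<^sub>R vm X m) U w' U)"
    by (simp add: ev4_scale1 mult_ac)
  also have "\<dots> = ev4 (p+q) W (\<Sum>m<p+q. (sg p m * ipm1 p q (vm X m) w) *\<^sub>R vm X m) U w' U"
    by (rule ev4_sum1[symmetric])
  also have "\<dots> = ev4 (p+q) W w U w' U" by (simp add: V2[OF X w])
  finally have "(real (p+q) - 3) * ev4 (p+q) W w U w' U = 0" by (simp add: algebra_simps)
  moreover have "real (p+q) - 3 \<noteq> 0" using n4 by simp
  ultimately show ?thesis by simp
qed

end

context LS begin

lemma E4_zero_W: "E4 X t 0 = 0"
  using E4_scale[of X t 0 0] by simp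

lemma weyl_kill:
  assumes W: "W \<in> weyl p q" and n4: "p+q \<ge> 4"
    and kill: "\<forall>X'\<in>Tset p q Z. wact (p+q) (MM X') W = 0"
  shows "W = 0"
proof -
  obtain X where X: "X \<in> Tset p q Z" using T_nonempty by blast
  have SZ: "\<And>w w'. w \<in> perp X \<Longrightarrow> w' \<in> perp' X \<Longrightarrow> ev4 (p+q) W w U w' U = 0"
    by (rule S_zero[OF X W n4 kill])
  have "\<forall>t\<in>T4. E4 X t W = 0"
  proof
    fix t assume t: "t \<in> T4"
    obtain i j k l where tt: "t = (i,j,k,l)" by (cases t) auto
    have ijkl: "i < 3" "j < 3" "k < 3" "l < 3" using t by (auto simp: T4_def tt)
    show "E4 X t W = 0"
    proof (cases "mu4 t = 0")
      case False
      have "mu4 t *\<^sub>R E4 X t W = 0"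
        using E4_comm[OF X weyl_box[OF W] t] kill X E4_zero_W by metis
      then show ?thesis using False by simp
    next
      case True
      then have s0: "real i + real j + real l = real k" by (simp add: mu4_def tt)
      show ?thesis
      proof (cases "(i = 0 \<and> j = 0) \<or> (k = 2 \<and> l = 0)")
        case True then show ?thesis by (rule E4_van[OF X W tt])
      next
        case False
        have s0': "i + j + l = k" using s0 by linarith
        have cs: "t = (1,0,1,0) \<or> t = (0,1,1,0) \<or> t = (1,0,2,1) \<or> t = (0,1,2,1)"
          using three_cases[OF ijkl(1)] three_cases[OF ijkl(2)] three_cases[OF ijkl(3)]
            three_cases[OF ijkl(4)] s0' False
          by (elim disjE) (simp_all add: tt)
        show ?thesis
        proof (rule E4_zero_iff[OF weyl_box[OF W]])
          fix a b c d assume abcd: "a < p+q" "b < p+q" "c < p+q" "d < p+q"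
          note u = unitv_vecs[OF abcd(1)] unitv_vecs[OF abcd(2)] unitv_vecs[OF abcd(3)] unitv_vecs[OF abcd(4)]
          note pa = KT_P1_perp[OF X u(1)] and pb = KT_P1_perp[OF X u(2)]
            and pc = Kv_P1_perp'[OF X u(3)] and pd = KT_P1_perp[OF X u(4)]
          note an = ev4_anti[OF W]
          have PP0: "PP X 0 = P0 X" and PP1: "PP X 1 = P1 X" and PP2: "PP X 2 = P2 X"
            by (simp_all add: PP_def)
          from cs show "ev4 (p+q) (E4 X t W) (unitv a) (unitv b) (unitv c) (unitv d) = 0"
          proof (elim disjE)
            assume tc: "t = (1,0,1,0)"
            show ?thesis unfolding tc ev4_E4 PP0 PP1 KT_P0
              by (simp add: ev4_lin SZ[OF pa pc])
          next
            assume tc: "t = (0,1,1,0)"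
            show ?thesis unfolding tc ev4_E4 PP0 PP1 KT_P0
              by (simp add: ev4_lin an[of U] SZ[OF pb pc])
          next
            assume "t = (1,0,2,1)"
            have "ev4 (p+q) W (KT (p+q) (P1 X) (unitv a)) U Z (KT (p+q) (P1 X) (unitv d)) = 0"
              using ev4_so[OF W, of "KT (p+q) (P1 X) (unitv a)" U Z] SZ[OF pa Iv_perp[OF pd]]
              by (simp add: Iv_Z)
            then show ?thesis unfolding \<open>t = (1,0,2,1)\<close> ev4_E4 PP0 PP1 PP2 KT_P0 Kv_P2
              by (simp add: ev4_lin)
          next
            assume "t = (0,1,2,1)"
            have "ev4 (p+q) W (KT (p+q) (P1 X) (unitv b)) U Z (KT (p+q) (P1 X) (unitv d)) = 0"
              using ev4_so[OF W, of "KT (p+q) (P1 X) (unitv b)" U Z] SZ[OF pb Iv_perp[OF pd]]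
              by (simp add: Iv_Z)
            then show ?thesis unfolding \<open>t = (0,1,2,1)\<close> ev4_E4 PP0 PP1 PP2 KT_P0 Kv_P2
              by (simp add: ev4_lin an[of U])
          qed
        qed
      qed
    qed
  qed
  then have "(\<Sum>t\<in>T4. E4 X t W) = 0" by simp
  then show ?thesis using E4_sum[OF X weyl_box[OF W]] by simp
qed

end

definition ev3 :: "nat \<Rightarrow> t3 \<Rightarrow> (nat \<Rightarrow> real) \<Rightarrow> (nat \<Rightarrow> real) \<Rightarrow> (nat \<Rightarrow> real) \<Rightarrow> real" where
  "ev3 n T x y z = (\<Sum>a<n. x a * (\<Sum>b<n. y b * (\<Sum>c<n. z c * T a b c)))"

definition c1 :: "nat \<Rightarrow> mat \<Rightarrow> t3 \<Rightarrow> t3" where "c1 n K T = (\<lambda>a b c. \<Sum>k<n. K a k * T k b c)"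
definition c2 :: "nat \<Rightarrow> mat \<Rightarrow> t3 \<Rightarrow> t3" where "c2 n K T = (\<lambda>a b c. \<Sum>k<n. K b k * T a k c)"
definition c3 :: "nat \<Rightarrow> mat \<Rightarrow> t3 \<Rightarrow> t3" where "c3 n K T = (\<lambda>a b c. \<Sum>k<n. K c k * T a b k)"

lemma cact_c: "cact n K T = c1 n K T + c2 n K T + c3 n K T"
  by (intro ext) (simp add: cact_def c1_def c2_def c3_def)

lemma ev3_c1: "ev3 n (c1 n K T) x y z = ev3 n T (KT n K x) y z"
proof -
  have s1: "\<And>a b. (\<Sum>c<n. z c * (\<Sum>k<n. K a k * T k b c)) = (\<Sum>k<n. K a k * (\<Sum>c<n. z c * T k b c))"
    by (rule pull)
  have s2: "\<And>a. (\<Sum>b<n. y b * (\<Sum>k<n. K a k * (\<Sum>c<n. z c * T k b c))) = (\<Sum>k<n. K a k * (\<Sum>b<n. y b * (\<Sum>c<n. z c * T k b c)))"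
    by (rule pull)
  have s3: "(\<Sum>a<n. x a * (\<Sum>k<n. K a k * (\<Sum>b<n. y b * (\<Sum>c<n. z c * T k b c)))) = (\<Sum>k<n. (\<Sum>a<n. K a k * x a) * (\<Sum>b<n. y b * (\<Sum>c<n. z c * T k b c)))"
    by (rule pullT)
  show ?thesis by (simp only: s1 s2 s3 ev3_def KT_def c1_def)
qed

lemma ev3_c2: "ev3 n (c2 n K T) x y z = ev3 n T x (KT n K y) z"
proof -
  have s1: "\<And>a b. (\<Sum>c<n. z c * (\<Sum>k<n. K b k * T a k c)) = (\<Sum>k<n. K b k * (\<Sum>c<n. z c * T a k c))"
    by (rule pull)
  have s2: "\<And>a. (\<Sum>b<n. y b * (\<Sum>k<n. K b k * (\<Sum>c<n. z c * T a k c))) = (\<Sum>k<n. (\<Sum>b<n. K b k * y b) * (\<Sum>c<n. z c * T a k c))"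
    by (rule pullT)
  show ?thesis by (simp only: s1 s2 ev3_def KT_def c2_def)
qed

lemma ev3_c3: "ev3 n (c3 n K T) x y z = ev3 n T x y (KT n K z)"
proof -
  have s1: "\<And>a b. (\<Sum>c<n. z c * (\<Sum>k<n. K c k * T a b k)) = (\<Sum>k<n. (\<Sum>c<n. K c k * z c) * T a b k)"
    by (rule pullT)
  show ?thesis by (simp only: s1 ev3_def KT_def c3_def)
qed

lemma ev3_Wadd: "ev3 n (T + T') x y z = ev3 n T x y z + ev3 n T' x y z"
  by (simp add: ev3_def algebra_simps sum.distrib)
lemma ev3_Wscale: "ev3 n (r *\<^sub>R T) x y z = r * ev3 n T x y z"
  by (simp add: ev3_def sum_distrib_left mult_ac)
lemma ev3_Wzero: "ev3 n 0 x y z = 0"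
  by (simp add: ev3_def)
lemma ev3_Wsum: "ev3 n (sum g A) x y z = (\<Sum>i\<in>A. ev3 n (g i) x y z)"
proof (induct A rule: infinite_finite_induct)
  case (infinite A) then show ?case by (simp only: sum.infinite ev3_Wzero not_False_eq_True)
next
  case empty then show ?case by (simp only: sum.empty ev3_Wzero)
next
  case (insert i A) then show ?case by (simp only: sum.insert ev3_Wadd not_False_eq_True simp_thms)
qed

lemma ev3_cact: "ev3 n (cact n K T) x y z = ev3 n T (KT n K x) y z + ev3 n T x (KT n K y) z + ev3 n T x y (KT n K z)"
  by (simp only: cact_c ev3_Wadd ev3_c1 ev3_c2 ev3_c3)

lemma ev3_add1: "ev3 n T (x + x') y z = ev3 n T x y z + ev3 n T x' y z"
  by (simp add: ev3_def algebra_simps sum.distrib)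
lemma ev3_add2: "ev3 n T x (y + y') z = ev3 n T x y z + ev3 n T x y' z"
  by (simp add: ev3_def algebra_simps sum.distrib)
lemma ev3_add3: "ev3 n T x y (z + z') = ev3 n T x y z + ev3 n T x y z'"
  by (simp add: ev3_def algebra_simps sum.distrib)
lemma ev3_scale1: "ev3 n T (r *\<^sub>R x) y z = r * ev3 n T x y z"
  by (simp add: ev3_def sum_distrib_left mult_ac)
lemma ev3_scale2: "ev3 n T x (r *\<^sub>R y) z = r * ev3 n T x y z"
  by (simp add: ev3_def sum_distrib_left mult_ac)
lemma ev3_scale3: "ev3 n T x y (r *\<^sub>R z) = r * ev3 n T x y z"
  by (simp add: ev3_def sum_distrib_left mult_ac)
lemma ev3_zero1: "ev3 n T 0 y z = 0" by (simp add: ev3_def)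
lemma ev3_zero2: "ev3 n T x 0 z = 0" by (simp add: ev3_def)
lemma ev3_zero3: "ev3 n T x y 0 = 0" by (simp add: ev3_def)
lemmas ev3_lin = ev3_add1 ev3_add2 ev3_add3 ev3_scale1 ev3_scale2 ev3_scale3 ev3_zero1 ev3_zero2 ev3_zero3

lemma ev3_sum1: "ev3 n T (sum g A) y z = (\<Sum>i\<in>A. ev3 n T (g i) y z)"
proof (induct A rule: infinite_finite_induct)
  case (infinite A) then show ?case by (simp only: sum.infinite ev3_lin not_False_eq_True)
next
  case empty then show ?case by (simp only: sum.empty ev3_lin)
next
  case (insert i A) then show ?case by (simp only: sum.insert ev3_lin not_False_eq_True simp_thms)
qed
lemma ev3_sum2: "ev3 n T x (sum g A) z = (\<Sum>i\<in>A. ev3 n T x (g i) z)"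
proof (induct A rule: infinite_finite_induct)
  case (infinite A) then show ?case by (simp only: sum.infinite ev3_lin not_False_eq_True)
next
  case empty then show ?case by (simp only: sum.empty ev3_lin)
next
  case (insert i A) then show ?case by (simp only: sum.insert ev3_lin not_False_eq_True simp_thms)
qed
lemma ev3_sum3: "ev3 n T x y (sum g A) = (\<Sum>i\<in>A. ev3 n T x y (g i))"
proof (induct A rule: infinite_finite_induct)
  case (infinite A) then show ?case by (simp only: sum.infinite ev3_lin not_False_eq_True)
next
  case empty then show ?case by (simp only: sum.empty ev3_lin)
next
  case (insert i A) then show ?case by (simp only: sum.insert ev3_lin not_False_eq_True simp_thms)
qed

lemma ev3_unit: "a < n \<Longrightarrow> b < n \<Longrightarrow> c < n \<Longrightarrow> ev3 n T (unitv a) (unitv b) (unitv c) = T a b c"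
  by (simp add: ev3_def unitv_def if_distrib[of "\<lambda>x. x * _"] cong: if_cong)

definition box3 :: "nat \<Rightarrow> t3 \<Rightarrow> bool" where
  "box3 n T \<longleftrightarrow> (\<forall>a b c. \<not> (a < n \<and> b < n \<and> c < n) \<longrightarrow> T a b c = 0)"

lemma box3_ext:
  assumes "box3 n T" "box3 n T'"
    and "\<And>a b c. a < n \<Longrightarrow> b < n \<Longrightarrow> c < n \<Longrightarrow>
      ev3 n T (unitv a) (unitv b) (unitv c) = ev3 n T' (unitv a) (unitv b) (unitv c)"
  shows "T = T'"
proof (intro ext)
  fix a b c
  show "T a b c = T' a b c"
  proof (cases "a < n \<and> b < n \<and> c < n")
    case True then show ?thesis using assms(3)[of a b c] by (simp add: ev3_unit)
  next
    case False then show ?thesis using assms(1,2) by (simp add: box3_def)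
  qed
qed

lemma box3_c1: "box3 n T \<Longrightarrow> ksupp n K \<Longrightarrow> box3 n (c1 n K T)"
  by (auto simp: box3_def ksupp_def c1_def intro!: sum.neutral)
lemma box3_c2: "box3 n T \<Longrightarrow> ksupp n K \<Longrightarrow> box3 n (c2 n K T)"
  by (auto simp: box3_def ksupp_def c2_def intro!: sum.neutral)
lemma box3_c3: "box3 n T \<Longrightarrow> ksupp n K \<Longrightarrow> box3 n (c3 n K T)"
  by (auto simp: box3_def ksupp_def c3_def intro!: sum.neutral)
lemma box3_cact: "box3 n T \<Longrightarrow> ksupp n K \<Longrightarrow> box3 n (cact n K T)"
  by (auto simp: box3_def ksupp_def cact_def intro!: sum.neutral)
lemma box3_scale: "box3 n T \<Longrightarrow> box3 n (r *\<^sub>R T)"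
  by (simp add: box3_def)
lemma box3_zero: "box3 n 0"
  by (simp add: box3_def)
lemma box3_sum: "(\<And>t. t \<in> A \<Longrightarrow> box3 n (g t)) \<Longrightarrow> box3 n (sum g A)"
  by (induct A rule: infinite_finite_induct) (auto simp: box3_def)

lemma c1_scale: "c1 n K (r *\<^sub>R T) = r *\<^sub>R c1 n K T"
  by (intro ext) (simp add: c1_def sum_distrib_left mult_ac)
lemma c2_scale: "c2 n K (r *\<^sub>R T) = r *\<^sub>R c2 n K T"
  by (intro ext) (simp add: c2_def sum_distrib_left mult_ac)
lemma c3_scale: "c3 n K (r *\<^sub>R T) = r *\<^sub>R c3 n K T"
  by (intro ext) (simp add: c3_def sum_distrib_left mult_ac)

lemma cact_linear: "linear (cact n K)"
proof (rule linearI)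
  fix x y :: t3
  show "cact n K (x + y) = cact n K x + cact n K y"
    by (intro ext) (simp add: cact_def sum.distrib distrib_left)
next
  fix r :: real and x :: t3
  show "cact n K (r *\<^sub>R x) = r *\<^sub>R cact n K x"
    by (intro ext) (simp add: cact_def sum_distrib_left mult_ac distrib_left)
qed

lemma cotton_D:
  assumes "T \<in> cotton p q"
  shows "\<And>a b c. \<not> (a < p+q \<and> b < p+q \<and> c < p+q) \<Longrightarrow> T a b c = 0"
    and "\<And>a b c. T a b c = - T b a c"
    and "\<And>a b c. T a b c + T b c a + T c a b = 0"
    and "\<And>a. (\<Sum>b<p+q. sg p b * T a b b) = 0"
  using assms unfolding cotton_def mem_Collect_eq by blast+

lemma cotton_box: "T \<in> cotton p q \<Longrightarrow> box3 (p+q) T"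
  using cotton_D(1) by (auto simp: box3_def)

lemma cotton_subspace: "subspace (cotton p q)"
  unfolding subspace_def
proof (intro conjI ballI allI)
  show "0 \<in> cotton p q" by (simp add: cotton_def)
next
  fix x y assume x: "x \<in> cotton p q" and y: "y \<in> cotton p q"
  note X = cotton_D[OF x] and Y = cotton_D[OF y]
  show "x + y \<in> cotton p q"
    unfolding cotton_def mem_Collect_eq
  proof (intro conjI allI impI)
    fix a b c assume h: "\<not> (a < p+q \<and> b < p+q \<and> c < p+q)"
    show "(x + y) a b c = 0" using X(1)[OF h] Y(1)[OF h] by simp
  next
    fix a b c
    show "(x + y) a b c = - (x + y) b a c" using X(2)[of a b c] Y(2)[of a b c] by simp
    show "(x + y) a b c + (x + y) b c a + (x + y) c a b = 0"
      using X(3)[of a b c] Y(3)[of a b c] by (simp add: algebra_simps)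
  next
    fix a
    show "(\<Sum>b<p+q. sg p b * (x + y) a b b) = 0" using X(4)[of a] Y(4)[of a]
      by (simp add: distrib_left sum.distrib)
  qed
next
  fix r :: real and x assume x: "x \<in> cotton p q"
  note X = cotton_D[OF x]
  show "r *\<^sub>R x \<in> cotton p q"
    unfolding cotton_def mem_Collect_eq
  proof (intro conjI allI impI)
    fix a b c assume h: "\<not> (a < p+q \<and> b < p+q \<and> c < p+q)"
    show "(r *\<^sub>R x) a b c = 0" using X(1)[OF h] by simp
  next
    fix a b c
    show "(r *\<^sub>R x) a b c = - (r *\<^sub>R x) b a c" using X(2)[of a b c] by simp
    have "(r *\<^sub>R x) a b c + (r *\<^sub>R x) b c a + (r *\<^sub>R x) c a b = r * (x a b c + x b c a + x c a b)"
      by (simp add: algebra_simps)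
    then show "(r *\<^sub>R x) a b c + (r *\<^sub>R x) b c a + (r *\<^sub>R x) c a b = 0" using X(3)[of a b c] by simp
  next
    fix a
    have "(\<Sum>b<p+q. sg p b * (r *\<^sub>R x) a b b) = r * (\<Sum>b<p+q. sg p b * x a b b)"
      by (simp add: sum_distrib_left mult_ac)
    then show "(\<Sum>b<p+q. sg p b * (r *\<^sub>R x) a b b) = 0" using X(4)[of a] by simp
  qed
qed

lemma cact_Kadd: "cact n (\<lambda>a k. K1 a k + K2 a k) T = cact n K1 T + cact n K2 T"
  by (intro ext) (simp add: cact_def sum.distrib distrib_right)

lemma cact_Idn:
  assumes T: "T \<in> cotton p q"
  shows "cact (p+q) (Idn (p+q)) T = 3 *\<^sub>R T"
proof (intro ext)
  fix a b c
  note Ts = cotton_D(1)[OF T]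
  show "cact (p+q) (Idn (p+q)) T a b c = (3 *\<^sub>R T) a b c"
    unfolding cact_def Idn_sum1 using Ts[of a b c] by auto
qed

lemma cact_cotton:
  assumes T: "T \<in> cotton p q" and Ks: "ksupp (p+q) K" and K: "kso p K"
  shows "cact (p+q) K T \<in> cotton p q"
  unfolding cotton_def mem_Collect_eq
proof (intro conjI allI impI)
  note TD = cotton_D[OF T]
  have Ksup: "\<And>a k. \<not> (a < p+q \<and> k < p+q) \<Longrightarrow> K a k = 0" using Ks unfolding ksupp_def by blast
  fix a b c assume out: "\<not> (a < p+q \<and> b < p+q \<and> c < p+q)"
  have t1: "(\<Sum>k<p+q. K a k * T k b c) = 0" using out by (intro sum.neutral) (auto simp: TD(1) Ksup)
  have t2: "(\<Sum>k<p+q. K b k * T a k c) = 0" using out by (intro sum.neutral) (auto simp: TD(1) Ksup)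
  have t3: "(\<Sum>k<p+q. K c k * T a b k) = 0" using out by (intro sum.neutral) (auto simp: TD(1) Ksup)
  show "cact (p+q) K T a b c = 0" by (simp add: cact_def t1 t2 t3)
next
  note TD = cotton_D[OF T]
  fix a b c
  have s1: "(\<Sum>k<p+q. K a k * T k b c) = - (\<Sum>k<p+q. K a k * T b k c)"
    by (rule sum_neg_cong) (subst TD(2), simp)
  have s2: "(\<Sum>k<p+q. K b k * T a k c) = - (\<Sum>k<p+q. K b k * T k a c)"
    by (rule sum_neg_cong) (subst TD(2), simp)
  have s3: "(\<Sum>k<p+q. K c k * T a b k) = - (\<Sum>k<p+q. K c k * T b a k)"
    by (rule sum_neg_cong) (subst TD(2), simp)
  show "cact (p+q) K T a b c = - cact (p+q) K T b a c" unfolding cact_def by (simp add: s1 s2 s3)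
  have "cact (p+q) K T a b c + cact (p+q) K T b c a + cact (p+q) K T c a b
    = (\<Sum>k<p+q. K a k * (T k b c + T b c k + T c k b))
    + (\<Sum>k<p+q. K b k * (T a k c + T k c a + T c a k))
    + (\<Sum>k<p+q. K c k * (T a b k + T b k a + T k a b))"
    unfolding cact_def by (simp add: distrib_left sum.distrib algebra_simps)
  also have "\<dots> = 0" by (simp add: TD(3))
  finally show "cact (p+q) K T a b c + cact (p+q) K T b c a + cact (p+q) K T c a b = 0" .
next
  note TD = cotton_D[OF T]
  fix a
  have hk: "\<And>b k. sg p b * K b k = - (sg p k * K k b)"
  proof -
    fix b k
    have "sg p b * K b k * sg p k = - K k b" using K by (simp add: kso_def)
    then have "sg p b * K b k * sg p k * sg p k = - K k b * sg p k" by simp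
    then show "sg p b * K b k = - (sg p k * K k b)" by (simp add: mult_ac)
  qed
  have e1: "(\<Sum>b<p+q. sg p b * (\<Sum>k<p+q. K a k * T k b b)) = 0"
  proof -
    have "(\<Sum>b<p+q. sg p b * (\<Sum>k<p+q. K a k * T k b b)) = (\<Sum>k<p+q. K a k * (\<Sum>b<p+q. sg p b * T k b b))"
      by (simp add: sum_distrib_left mult_ac) (rule sum.swap)
    also have "\<dots> = 0" by (simp add: TD(4))
    finally show ?thesis .
  qed
  have e23: "(\<Sum>b<p+q. sg p b * (\<Sum>k<p+q. K b k * T a k b)) + (\<Sum>b<p+q. sg p b * (\<Sum>k<p+q. K b k * T a b k)) = 0"
  proof -
    have A: "(\<Sum>b<p+q. sg p b * (\<Sum>k<p+q. K b k * T a b k)) = (\<Sum>b<p+q. \<Sum>k<p+q. sg p b * K b k * T a b k)"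
      by (simp add: sum_distrib_left mult_ac)
    also have "\<dots> = (\<Sum>k<p+q. \<Sum>b<p+q. sg p b * K b k * T a b k)" by (rule sum.swap)
    also have "\<dots> = (\<Sum>k<p+q. \<Sum>b<p+q. - (sg p k * K k b * T a b k))"
    proof (intro sum.cong refl)
      fix k b show "sg p b * K b k * T a b k = - (sg p k * K k b * T a b k)" unfolding hk[of b k] by simp
    qed
    finally have A': "(\<Sum>b<p+q. sg p b * (\<Sum>k<p+q. K b k * T a b k)) = (\<Sum>k<p+q. \<Sum>b<p+q. - (sg p k * K k b * T a b k))" .
    have B: "(\<Sum>b<p+q. sg p b * (\<Sum>k<p+q. K b k * T a k b)) = (\<Sum>b<p+q. \<Sum>k<p+q. sg p b * K b k * T a k b)"
      by (simp add: sum_distrib_left mult_ac)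
    show ?thesis unfolding A' B by (simp add: sum_negf)
  qed
  show "(\<Sum>b<p+q. sg p b * cact (p+q) K T a b b) = 0"
    unfolding cact_def using e1 e23 by (simp add: distrib_left sum.distrib)
qed

lemma cact_Kv: "cact n K T = cact n K T" ..

context LS begin

lemma cotton_inv:
  assumes T: "T \<in> cotton p q"
  shows "cact (p+q) (MM X) T \<in> cotton p q"
proof -
  have "cact (p+q) (MM X) T = 3 *\<^sub>R T + cact (p+q) (KK X) T"
    unfolding MM_split cact_Kadd cact_Idn[OF T] ..
  also have "\<dots> \<in> cotton p q"
    using cotton_subspace T cact_cotton[OF T KK_supp KK_so]
    by (intro subspace_add subspace_scale) auto
  finally show ?thesis .
qed

end

lemma ev3_anti:
  assumes T: "T \<in> cotton p q"
  shows "ev3 (p+q) T x y z = - ev3 (p+q) T y x z"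
proof -
  define R where "R a b = (\<Sum>c<p+q. z c * T a b c)" for a b
  have hh: "\<And>a b c. T b a c = - T a b c" using cotton_D(2)[OF T] by metis
  have Ra: "R b a = - R a b" for a b
    unfolding R_def by (simp add: hh[of a b] sum_negf)
  have e1: "ev3 (p+q) T x y z = (\<Sum>a<p+q. \<Sum>b<p+q. x a * y b * R a b)"
    by (simp add: ev3_def R_def sum_distrib_left mult.assoc)
  have e2: "ev3 (p+q) T y x z = (\<Sum>a<p+q. \<Sum>b<p+q. y a * x b * R a b)"
    by (simp add: ev3_def R_def sum_distrib_left mult.assoc)
  have "(\<Sum>a<p+q. \<Sum>b<p+q. y a * x b * R a b) = (\<Sum>b<p+q. \<Sum>a<p+q. y a * x b * R a b)"
    by (rule sum.swap)
  also have "\<dots> = - (\<Sum>a<p+q. \<Sum>b<p+q. x a * y b * R a b)"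
    unfolding sum_negf[symmetric]
  proof (intro sum.cong refl)
    fix a b show "y b * x a * R b a = - (x a * y b * R a b)" unfolding Ra[of b a] by (simp add: mult_ac)
  qed
  finally show ?thesis using e1 e2 by simp
qed

context LS begin

definition E3 :: "(nat \<Rightarrow> real) \<Rightarrow> nat \<times> nat \<times> nat \<Rightarrow> t3 \<Rightarrow> t3" where
  "E3 X t T = (case t of (i, j, k) \<Rightarrow> c1 (p+q) (PP X i) (c2 (p+q) (PP X j) (c3 (p+q) (PP X k) T)))"

definition mu3 :: "nat \<times> nat \<times> nat \<Rightarrow> real" where
  "mu3 t = (case t of (i, j, k) \<Rightarrow> real i + real j + real k)"

definition T3 :: "(nat \<times> nat \<times> nat) set" where
  "T3 = {..<3} \<times> {..<3} \<times> {..<3}"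

lemma T3_finite: "finite T3" by (simp add: T3_def)

lemma ev3_E3: "ev3 (p+q) (E3 X (i,j,k) T) x y z =
   ev3 (p+q) T (KT (p+q) (PP X i) x) (KT (p+q) (PP X j) y) (KT (p+q) (PP X k) z)"
  by (simp only: E3_def prod.case ev3_c1 ev3_c2 ev3_c3)

lemma E3_box: "box3 (p+q) T \<Longrightarrow> box3 (p+q) (E3 X t T)"
  by (cases t) (simp add: E3_def box3_c1 box3_c2 box3_c3 PP_supp)

lemma E3_scale: "E3 X t (r *\<^sub>R T) = r *\<^sub>R E3 X t T"
  by (cases t) (simp add: E3_def c1_scale c2_scale c3_scale)

lemma E3_eig:
  assumes X: "X \<in> Tset p q Z" and T: "box3 (p+q) T" and t: "t \<in> T3"
  shows "cact (p+q) (MM X) (E3 X t T) = mu3 t *\<^sub>R E3 X t T"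
proof -
  obtain i j k where tt: "t = (i,j,k)" by (cases t) auto
  have ijk: "i < 3" "j < 3" "k < 3" using t by (auto simp: T3_def tt)
  show ?thesis
  proof (rule box3_ext)
    show "box3 (p+q) (cact (p+q) (MM X) (E3 X t T))" by (intro box3_cact E3_box T MM_supp)
    show "box3 (p+q) (mu3 t *\<^sub>R E3 X t T)" by (intro box3_scale E3_box T)
  next
    fix a b c assume abc: "a < p+q" "b < p+q" "c < p+q"
    note u = unitv_vecs[OF abc(1)] unitv_vecs[OF abc(2)] unitv_vecs[OF abc(3)]
    show "ev3 (p+q) (cact (p+q) (MM X) (E3 X t T)) (unitv a) (unitv b) (unitv c) =
          ev3 (p+q) (mu3 t *\<^sub>R E3 X t T) (unitv a) (unitv b) (unitv c)"
      unfolding ev3_cact ev3_Wscale tt ev3_E3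
        KT_PP_MM[OF X u(1) ijk(1)] KT_PP_MM[OF X u(2) ijk(2)] KT_PP_MM[OF X u(3) ijk(3)]
      by (simp add: ev3_lin mu3_def algebra_simps)
  qed
qed

lemma E3_comm:
  assumes X: "X \<in> Tset p q Z" and T: "box3 (p+q) T" and t: "t \<in> T3"
  shows "E3 X t (cact (p+q) (MM X) T) = mu3 t *\<^sub>R E3 X t T"
proof -
  obtain i j k where tt: "t = (i,j,k)" by (cases t) auto
  have ijk: "i < 3" "j < 3" "k < 3" using t by (auto simp: T3_def tt)
  show ?thesis
  proof (rule box3_ext)
    show "box3 (p+q) (E3 X t (cact (p+q) (MM X) T))" by (intro box3_cact E3_box T MM_supp)
    show "box3 (p+q) (mu3 t *\<^sub>R E3 X t T)" by (intro box3_scale E3_box T)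
  next
    fix a b c assume abc: "a < p+q" "b < p+q" "c < p+q"
    note u = unitv_vecs[OF abc(1)] unitv_vecs[OF abc(2)] unitv_vecs[OF abc(3)]
    show "ev3 (p+q) (E3 X t (cact (p+q) (MM X) T)) (unitv a) (unitv b) (unitv c) =
          ev3 (p+q) (mu3 t *\<^sub>R E3 X t T) (unitv a) (unitv b) (unitv c)"
      unfolding ev3_Wscale tt ev3_E3 ev3_cact
        KT_MM_PP[OF X u(1) ijk(1)] KT_MM_PP[OF X u(2) ijk(2)] KT_MM_PP[OF X u(3) ijk(3)]
      by (simp add: ev3_lin mu3_def algebra_simps)
  qed
qed

lemma sum_T3: "(\<Sum>t\<in>T3. f t) = (\<Sum>i<3. \<Sum>j<3. \<Sum>k<3. f (i,j,k))"
  by (simp add: T3_def sum.cartesian_product)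

lemma E3_sum:
  assumes X: "X \<in> Tset p q Z" and T: "box3 (p+q) T"
  shows "(\<Sum>t\<in>T3. E3 X t T) = T"
proof (rule box3_ext)
  show "box3 (p+q) (\<Sum>t\<in>T3. E3 X t T)" by (intro box3_sum E3_box T)
  show "box3 (p+q) T" by (rule T)
next
  fix a b c assume abc: "a < p+q" "b < p+q" "c < p+q"
  note u = unitv_vecs[OF abc(1)] unitv_vecs[OF abc(2)] unitv_vecs[OF abc(3)]
  show "ev3 (p+q) (\<Sum>t\<in>T3. E3 X t T) (unitv a) (unitv b) (unitv c) =
        ev3 (p+q) T (unitv a) (unitv b) (unitv c)"
    unfolding ev3_Wsum sum_T3 ev3_E3
    by (simp only: ev3_sum1[symmetric] ev3_sum2[symmetric] ev3_sum3[symmetric]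
        KT_PP_sum[OF X u(1)] KT_PP_sum[OF X u(2)] KT_PP_sum[OF X u(3)])
qed

lemma E3_van:
  assumes X: "X \<in> Tset p q Z" and T: "T \<in> cotton p q" and t: "t = (0,0,k)"
  shows "E3 X t T = 0"
proof (rule box3_ext)
  show "box3 (p+q) (E3 X t T)" by (intro E3_box cotton_box T)
  show "box3 (p+q) 0" by (rule box3_zero)
next
  fix a b c
  have UU3: "ev3 (p+q) T U U w = 0" for w using ev3_anti[OF T, of U U w] by simp
  show "ev3 (p+q) (E3 X t T) (unitv a) (unitv b) (unitv c) = ev3 (p+q) 0 (unitv a) (unitv b) (unitv c)"
    unfolding t ev3_E3 by (simp add: PP_def KT_P0 ev3_lin UU3 ev3_Wzero)
qed

lemma cotton_nonpos_zero:
  assumes X: "X \<in> Tset p q Z" and T: "T \<in> cotton p q" and c: "c \<le> 0"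
    and ev: "cact (p+q) (MM X) T = c *\<^sub>R T"
  shows "T = 0"
proof -
  have "\<forall>t\<in>T3. E3 X t T = 0"
  proof
    fix t assume t: "t \<in> T3"
    obtain i j k where tt: "t = (i,j,k)" by (cases t) auto
    have "mu3 t *\<^sub>R E3 X t T = c *\<^sub>R E3 X t T"
      using E3_comm[OF X cotton_box[OF T] t] ev E3_scale by metis
    then have e: "(mu3 t - c) *\<^sub>R E3 X t T = 0" by (simp add: algebra_simps)
    show "E3 X t T = 0"
    proof (cases "mu3 t = c")
      case False then show ?thesis using e by simp
    next
      case True
      then have "real i + real j + real k \<le> 0" using c by (simp add: mu3_def tt)
      then have "i = 0" "j = 0" by linarith+
      then show ?thesis using E3_van[OF X T] tt by simp
    qed
  qed
  then have "(\<Sum>t\<in>T3. E3 X t T) = 0" by simp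
  then show ?thesis using E3_sum[OF X cotton_box[OF T]] by simp
qed

lemma cotton_diag:
  assumes X: "X \<in> Tset p q Z"
  shows "diagonalizable_on (cact (p+q) (MM X)) (cotton p q)"
proof (rule diag_from_decomp[OF cact_linear cotton_subspace])
  show "cact (p+q) (MM X) ` cotton p q \<subseteq> cotton p q" using cotton_inv by auto
next
  fix T assume T: "T \<in> cotton p q"
  define G where "G l = (\<Sum>t\<in>{t\<in>T3. mu3 t = l}. E3 X t T)" for l
  have "finite (mu3 ` T3)" using T3_finite by simp
  moreover have "\<forall>l\<in>mu3 ` T3. cact (p+q) (MM X) (G l) = l *\<^sub>R G l"
  proof
    fix l assume "l \<in> mu3 ` T3"
    have "cact (p+q) (MM X) (G l) = (\<Sum>t\<in>{t\<in>T3. mu3 t = l}. cact (p+q) (MM X) (E3 X t T))"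
      unfolding G_def by (rule linear_sum[OF cact_linear])
    also have "\<dots> = (\<Sum>t\<in>{t\<in>T3. mu3 t = l}. l *\<^sub>R E3 X t T)"
      by (rule sum.cong[OF refl]) (simp add: E3_eig[OF X cotton_box[OF T]])
    also have "\<dots> = l *\<^sub>R G l" by (simp add: G_def scaleR_sum_right)
    finally show "cact (p+q) (MM X) (G l) = l *\<^sub>R G l" .
  qed
  moreover have "T = sum G (mu3 ` T3)"
    unfolding G_def using sum.image_gen[OF T3_finite, of "\<lambda>t. E3 X t T" mu3] E3_sum[OF X cotton_box[OF T]]
    by simp
  ultimately show "\<exists>L G. finite L \<and> (\<forall>l\<in>L. cact (p+q) (MM X) (G l) = l *\<^sub>R G l) \<and> T = sum G L"
    by blast
qed

end

context LS begin

lemma C_sub_F: "Cset p q Z \<subseteq> Fset p q Z"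
proof
  fix X assume "X \<in> Cset p q Z"
  then obtain c where X: "X = c *\<^sub>R U" unfolding Cset_char by blast
  have "X \<in> vecs (p+q)" using X U_vecs by (simp add: vecs_scale)
  moreover have "pairZX (p+q) Z X = 0" by (simp add: X lin_simps ZU)
  moreover have "ipm1 p q X X = 0" by (simp add: X lin_simps lin1_simps UU)
  ultimately show "X \<in> Fset p q Z" unfolding Fset_char by simp
qed

lemma weyl_Wss: "X \<in> Tset p q Z \<Longrightarrow> Wss (weyl_act p q (br p q (g1 p q Z) (gm1 p q X))) (weyl p q) = {0}"
  unfolding weyl_act_eq by (rule Wss_zero) (rule weyl_neg_zero, auto)

lemma cotton_Wss: "X \<in> Tset p q Z \<Longrightarrow> Wss (cotton_act p q (br p q (g1 p q Z) (gm1 p q X))) (cotton p q) = {0}"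
  unfolding cotton_act_eq by (rule Wss_zero) (rule cotton_nonpos_zero, auto)

lemma weyl_Wst_inter:
  assumes n4: "p+q \<ge> 4"
  shows "(\<Inter>X \<in> Tset p q Z. Wst (weyl_act p q (br p q (g1 p q Z) (gm1 p q X))) (weyl p q)) = {0}"
proof
  show "{0} \<subseteq> (\<Inter>X \<in> Tset p q Z. Wst (weyl_act p q (br p q (g1 p q Z) (gm1 p q X))) (weyl p q))"
    by (auto simp: Wst_def span_zero)
next
  show "(\<Inter>X \<in> Tset p q Z. Wst (weyl_act p q (br p q (g1 p q Z) (gm1 p q X))) (weyl p q)) \<subseteq> {0}"
  proof
    fix W assume W: "W \<in> (\<Inter>X \<in> Tset p q Z. Wst (weyl_act p q (br p q (g1 p q Z) (gm1 p q X))) (weyl p q))"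
    have k: "W \<in> weyl p q \<and> wact (p+q) (MM X) W = 0" if X: "X \<in> Tset p q Z" for X
    proof -
      have "W \<in> Wst (wact (p+q) (MM X)) (weyl p q)" using W X by (simp add: weyl_act_eq)
      also have "\<dots> \<subseteq> {v \<in> weyl p q. wact (p+q) (MM X) v = 0}"
        by (rule Wst_sub[OF wact_linear weyl_subspace]) (rule weyl_neg_zero[OF X], auto)
      finally show ?thesis by simp
    qed
    obtain X0 where X0: "X0 \<in> Tset p q Z" using T_nonempty by blast
    have "W = 0" by (rule weyl_kill[OF conjunct1[OF k[OF X0]] n4]) (use k in blast)
    then show "W \<in> {0}" by simp
  qed
qed

lemma cotton_Wst_inter:
  "(\<Inter>X \<in> Tset p q Z. Wst (cotton_act p q (br p q (g1 p q Z) (gm1 p q X))) (cotton p q)) = {0}"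
proof -
  have e: "Wst (cotton_act p q (br p q (g1 p q Z) (gm1 p q X))) (cotton p q) = {0}" if X: "X \<in> Tset p q Z" for X
  proof -
    have "eigvecs (cact (p+q) (MM X)) (cotton p q) (\<lambda>c. c \<le> 0) \<subseteq> {0}"
      using cotton_nonpos_zero[OF X] by (auto simp: eigvecs_def)
    then have "Wst (cact (p+q) (MM X)) (cotton p q) \<subseteq> span {0}" unfolding Wst_def by (rule span_mono)
    then have "Wst (cact (p+q) (MM X)) (cotton p q) \<subseteq> {0}" by simp
    moreover have "0 \<in> Wst (cact (p+q) (MM X)) (cotton p q)" unfolding Wst_def by (rule span_zero)
    ultimately show ?thesis unfolding cotton_act_eq[OF X] by blast
  qed
  obtain X0 where X0: "X0 \<in> Tset p q Z" using T_nonempty by blast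
  show ?thesis using e X0 by blast
qed

end

theorem lemma3p6:
  fixes p q :: nat and Z :: "nat \<Rightarrow> real"
  assumes n3: "p + q \<ge> 3"
    and Zin: "Z \<in> vecs (p+q)"
    and Znz: "Z \<noteq> 0"
    and Znull: "ip1 p q Z Z = 0"
  shows "{c *\<^sub>R IZt p q Z | c. True} = Cset p q Z
     \<and> Cset p q Z \<subseteq> Fset p q Z
     \<and> Fset p q Z = {X \<in> vecs (p+q). pairZX (p+q) Z X = 0 \<and> ipm1 p q X X = 0}
     \<and> Tset p q Z = {X \<in> vecs (p+q). pairZX (p+q) Z X = 1 \<and> ipm1 p q X X = 0}
     \<and> (\<forall>X \<in> Tset p q Z.
          diagonalizable_on (adm1 p q (br p q (g1 p q Z) (gm1 p q X))) (vecs (p+q))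
        \<and> (p + q \<ge> 4 \<longrightarrow>
             diagonalizable_on (weyl_act p q (br p q (g1 p q Z) (gm1 p q X))) (weyl p q))
        \<and> (p + q = 3 \<longrightarrow>
             diagonalizable_on (cotton_act p q (br p q (g1 p q Z) (gm1 p q X))) (cotton p q))
        \<and> (\<forall>v \<in> vecs (p+q). \<forall>c::real. v \<noteq> 0 \<and>
              adm1 p q (br p q (g1 p q Z) (gm1 p q X)) v = c *\<^sub>R v \<longrightarrow> c \<le> 0)
        \<and> {v \<in> vecs (p+q). adm1 p q (br p q (g1 p q Z) (gm1 p q X)) v = 0} = Cset p q Z
        \<and> (p + q \<ge> 4 \<longrightarrow>
             Wss (weyl_act p q (br p q (g1 p q Z) (gm1 p q X))) (weyl p q) = {0})
        \<and> (p + q = 3 \<longrightarrow>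
             Wss (cotton_act p q (br p q (g1 p q Z) (gm1 p q X))) (cotton p q) = {0}))
     \<and> (p + q \<ge> 4 \<longrightarrow>
          (\<Inter>X \<in> Tset p q Z. Wst (weyl_act p q (br p q (g1 p q Z) (gm1 p q X))) (weyl p q)) = {0})
     \<and> (p + q = 3 \<longrightarrow>
          (\<Inter>X \<in> Tset p q Z. Wst (cotton_act p q (br p q (g1 p q Z) (gm1 p q X))) (cotton p q)) = {0})"
proof -
  interpret LS p q Z using assms by unfold_locales
  have c5: "\<forall>X \<in> Tset p q Z.
          diagonalizable_on (adm1 p q (br p q (g1 p q Z) (gm1 p q X))) (vecs (p+q))
        \<and> (p + q \<ge> 4 \<longrightarrow>
             diagonalizable_on (weyl_act p q (br p q (g1 p q Z) (gm1 p q X))) (weyl p q))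
        \<and> (p + q = 3 \<longrightarrow>
             diagonalizable_on (cotton_act p q (br p q (g1 p q Z) (gm1 p q X))) (cotton p q))
        \<and> (\<forall>v \<in> vecs (p+q). \<forall>c::real. v \<noteq> 0 \<and>
              adm1 p q (br p q (g1 p q Z) (gm1 p q X)) v = c *\<^sub>R v \<longrightarrow> c \<le> 0)
        \<and> {v \<in> vecs (p+q). adm1 p q (br p q (g1 p q Z) (gm1 p q X)) v = 0} = Cset p q Z
        \<and> (p + q \<ge> 4 \<longrightarrow>
             Wss (weyl_act p q (br p q (g1 p q Z) (gm1 p q X))) (weyl p q) = {0})
        \<and> (p + q = 3 \<longrightarrow>
             Wss (cotton_act p q (br p q (g1 p q Z) (gm1 p q X))) (cotton p q) = {0})"
  proof
    fix X assume X: "X \<in> Tset p q Z"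
    have d1: "diagonalizable_on (adm1 p q (br p q (g1 p q Z) (gm1 p q X))) (vecs (p+q))" by (rule adm1_diag[OF X])
    have d2: "diagonalizable_on (weyl_act p q (br p q (g1 p q Z) (gm1 p q X))) (weyl p q)"
      unfolding weyl_act_eq[OF X] by (rule weyl_diag[OF X])
    have d3: "diagonalizable_on (cotton_act p q (br p q (g1 p q Z) (gm1 p q X))) (cotton p q)"
      unfolding cotton_act_eq[OF X] by (rule cotton_diag[OF X])
    have d4: "\<forall>v \<in> vecs (p+q). \<forall>c::real. v \<noteq> 0 \<and>
              adm1 p q (br p q (g1 p q Z) (gm1 p q X)) v = c *\<^sub>R v \<longrightarrow> c \<le> 0"
      using adm1_nonpos[OF X] by blast
    have d5: "{v \<in> vecs (p+q). adm1 p q (br p q (g1 p q Z) (gm1 p q X)) v = 0} = Cset p q Z"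
      by (rule adm1_ker[OF X])
    have d6: "Wss (weyl_act p q (br p q (g1 p q Z) (gm1 p q X))) (weyl p q) = {0}" by (rule weyl_Wss[OF X])
    have d7: "Wss (cotton_act p q (br p q (g1 p q Z) (gm1 p q X))) (cotton p q) = {0}" by (rule cotton_Wss[OF X])
    show "diagonalizable_on (adm1 p q (br p q (g1 p q Z) (gm1 p q X))) (vecs (p+q))
        \<and> (p + q \<ge> 4 \<longrightarrow>
             diagonalizable_on (weyl_act p q (br p q (g1 p q Z) (gm1 p q X))) (weyl p q))
        \<and> (p + q = 3 \<longrightarrow>
             diagonalizable_on (cotton_act p q (br p q (g1 p q Z) (gm1 p q X))) (cotton p q))
        \<and> (\<forall>v \<in> vecs (p+q). \<forall>c::real. v \<noteq> 0 \<and>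
              adm1 p q (br p q (g1 p q Z) (gm1 p q X)) v = c *\<^sub>R v \<longrightarrow> c \<le> 0)
        \<and> {v \<in> vecs (p+q). adm1 p q (br p q (g1 p q Z) (gm1 p q X)) v = 0} = Cset p q Z
        \<and> (p + q \<ge> 4 \<longrightarrow>
             Wss (weyl_act p q (br p q (g1 p q Z) (gm1 p q X))) (weyl p q) = {0})
        \<and> (p + q = 3 \<longrightarrow>
             Wss (cotton_act p q (br p q (g1 p q Z) (gm1 p q X))) (cotton p q) = {0})"
      using d1 d2 d3 d4 d5 d6 d7 by blast
  qed
  have c6: "p + q \<ge> 4 \<longrightarrow>
          (\<Inter>X \<in> Tset p q Z. Wst (weyl_act p q (br p q (g1 p q Z) (gm1 p q X))) (weyl p q)) = {0}"
    using weyl_Wst_inter by blast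
  have c7: "p + q = 3 \<longrightarrow>
          (\<Inter>X \<in> Tset p q Z. Wst (cotton_act p q (br p q (g1 p q Z) (gm1 p q X))) (cotton p q)) = {0}"
    using cotton_Wst_inter by blast
  show ?thesis
    using Cset_char[symmetric] C_sub_F Fset_char Tset_char c5 c6 c7 by blast
qed

end
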